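(* Equip $\mathcal{I}_\alpha$ with the metric $d_\alpha$ (see context). Then: (a) The map $M\colon\mathcal{I}_\alpha\to\mathcal{M}$, $M(\beta)=\sum_{U\in\beta}\mathrm{Leb}(U)\,\delta_{\mathscr{D}_\beta(U)}$, is continuous, where $\mathcal{M}$ is the set of compactly supported finite Borel measures on $[0,\infty)$ with the topology of weak convergence. (b) The diversity map $\beta\mapsto\mathscr{D}_\beta(\infty)$ is $d_\alpha$-continuous on $\mathcal{I}_\alpha$, but not $d_H$-continuous on $\mathcal{I}_\alpha$. (c) The map $\textsc{ranked}\colon\mathcal{I}_\alpha\to\mathcal{S}^\downarrow$ that associates with $\beta$ the sequence of decreasing order statistics of $(\mathrm{Leb}(U),U\in\beta)$ (padded with zeros) is continuous, where $\mathcal{S}^\downarrow=\{(x_k)_{k\ge1}\colon x_1\ge x_2\ge\cdots\ge0,\ \sum_k x_k<\infty\}$ carries the $\ell_1$ metric.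
   Context: Fix $\alpha\in(0,1)$. An interval partition is a set $\beta$ of disjoint open subintervals (blocks) of some interval $[0,L]$ that cover $[0,L]$ up to a Lebesgue-null set; write $\|\beta\|:=L$ and $\mathrm{Leb}(U)$ for the length of a block $U$. For $\beta$ put $C_\beta:=[0,\|\beta\|]\setminus\bigcup_{U\in\beta}U$ and let $d_H(\beta,\gamma)$ be the Hausdorff distance between $C_\beta$ and $C_\gamma$. A partition $\beta$ has the $\alpha$-diversity property if for every $t\in[0,\|\beta\|]$ the limit $\mathscr{D}_\beta(t):=\Gamma(1-\alpha)\lim_{h\downarrow0}h^\alpha\#\{(a,b)\in\beta\colon b-a>h,\ b\le t\}$ exists; $\mathcal{I}_\alpha$ is the set of such partitions. For $U\in\beta$, $\mathscr{D}_\beta(U):=\mathscr{D}_\beta(t)$ for any $t\in U$, and $\mathscr{D}_\beta(\infty):=\mathscr{D}_\beta(\|\beta\|)$. A correspondence between $\beta,\gamma\in\mathcal{I}_\alpha$ is a finite sequence $(U_j,V_j)_{j\in[n]}$, $n\ge0$, of pairs in $\beta\times\gamma$ with $(U_j)_j$ and $(V_j)_j$ each strictly increasing in left-to-right order. Its $\alpha$-distortion is the maximum of (i) $\sum_{j}|\mathrm{Leb}(U_j)-\mathrm{Leb}(V_j)|+\|\beta\|-\sum_j\mathrm{Leb}(U_j)$, (ii) $\sum_{j}|\mathrm{Leb}(U_j)-\mathrm{Leb}(V_j)|+\|\gamma\|-\sum_j\mathrm{Leb}(V_j)$, (iii) $\sup_{j}|\mathscr{D}_\beta(U_j)-\mathscr{D}_\gamma(V_j)|$,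 (iv) $|\mathscr{D}_\beta(\infty)-\mathscr{D}_\gamma(\infty)|$. $d_\alpha(\beta,\gamma)$ is the infimum of the $\alpha$-distortion over all correspondences. *)

theory Defs
  imports "HOL-Analysis.Analysis"
begin

text \<open>An interval partition is represented by the set of its blocks; a block is
  the open interval with endpoints (a,b), encoded as the pair (a,b).\<close>

definition interval_partition :: "(real \<times> real) set \<Rightarrow> bool" where
  "interval_partition \<beta> \<longleftrightarrow>
     (\<forall>(a,b)\<in>\<beta>. 0 \<le> a \<and> a < b) \<and>
     (\<forall>U\<in>\<beta>. \<forall>V\<in>\<beta>. U \<noteq> V \<longrightarrow>
        {fst U<..<snd U} \<inter> {fst V<..<snd V} = {}) \<and>
     (\<exists>L. (\<forall>(a,b)\<in>\<beta>. b \<le> L) \<and>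
          {0..L} - (\<Union>(a,b)\<in>\<beta>. {a<..<b}) \<in> null_sets lborel)"

definition IP_mass :: "(real \<times> real) set \<Rightarrow> real" where
  "IP_mass \<beta> = (THE L. (\<forall>(a,b)\<in>\<beta>. b \<le> L) \<and>
          {0..L} - (\<Union>(a,b)\<in>\<beta>. {a<..<b}) \<in> null_sets lborel)"

definition block_len :: "real \<times> real \<Rightarrow> real" where
  "block_len U = snd U - fst U"

definition div_count :: "real \<Rightarrow> (real \<times> real) set \<Rightarrow> real \<Rightarrow> real \<Rightarrow> real" where
  "div_count \<alpha> \<beta> t h = h powr \<alpha> * real (card {(a,b)\<in>\<beta>. b - a > h \<and> b \<le> t})"

definition diversity_property :: "real \<Rightarrow> (real \<times> real) set \<Rightarrow> bool" where
  "diversity_property \<alpha> \<beta> \<longleftrightarrow>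
     (\<forall>t\<in>{0..IP_mass \<beta>}. \<exists>l. (div_count \<alpha> \<beta> t \<longlongrightarrow> l) (at_right 0))"

definition diversity :: "real \<Rightarrow> (real \<times> real) set \<Rightarrow> real \<Rightarrow> real" where
  "diversity \<alpha> \<beta> t = Gamma (1 - \<alpha>) * Lim (at_right 0) (div_count \<alpha> \<beta> t)"

text \<open>Diversity of a block U: D(t) for any t in U (we take the midpoint).\<close>
definition block_div :: "real \<Rightarrow> (real \<times> real) set \<Rightarrow> real \<times> real \<Rightarrow> real" where
  "block_div \<alpha> \<beta> U = diversity \<alpha> \<beta> ((fst U + snd U) / 2)"

definition total_div :: "real \<Rightarrow> (real \<times> real) set \<Rightarrow> real" where
  "total_div \<alpha> \<beta> = diversity \<alpha> \<beta> (IP_mass \<beta>)"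

definition I_alpha :: "real \<Rightarrow> (real \<times> real) set set" where
  "I_alpha \<alpha> = {\<beta>. interval_partition \<beta> \<and> diversity_property \<alpha> \<beta>}"

text \<open>A correspondence: a finite list of pairs (U_j,V_j) in beta x gamma, with
  both components strictly increasing left to right (blocks are disjoint, so
  left-to-right order is the order of left endpoints).\<close>
definition correspondence ::
    "(real \<times> real) set \<Rightarrow> (real \<times> real) set \<Rightarrow> ((real \<times> real) \<times> (real \<times> real)) list \<Rightarrow> bool" where
  "correspondence \<beta> \<gamma> cs \<longleftrightarrow>
     (\<forall>p\<in>set cs. fst p \<in> \<beta> \<and> snd p \<in> \<gamma>) \<and>
     sorted_wrt (\<lambda>p q. fst (fst p) < fst (fst q)) cs \<and>
     sorted_wrt (\<lambda>p q. fst (snd p) < fst (snd q)) cs"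

definition distortion ::
    "real \<Rightarrow> (real \<times> real) set \<Rightarrow> (real \<times> real) set \<Rightarrow> ((real \<times> real) \<times> (real \<times> real)) list \<Rightarrow> real" where
  "distortion \<alpha> \<beta> \<gamma> cs =
     (let s = (\<Sum>p\<leftarrow>cs. \<bar>block_len (fst p) - block_len (snd p)\<bar>) in
      Max ({ s + IP_mass \<beta> - (\<Sum>p\<leftarrow>cs. block_len (fst p)),
             s + IP_mass \<gamma> - (\<Sum>p\<leftarrow>cs. block_len (snd p)),
             \<bar>total_div \<alpha> \<beta> - total_div \<alpha> \<gamma>\<bar> } \<union>
           (\<lambda>p. \<bar>block_div \<alpha> \<beta> (fst p) - block_div \<alpha> \<gamma> (snd p)\<bar>) ` set cs))"

definition d_alpha :: "real \<Rightarrow> (real \<times> real) set \<Rightarrow> (real \<times> real) set \<Rightarrow> real" where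
  "d_alpha \<alpha> \<beta> \<gamma> = Inf {distortion \<alpha> \<beta> \<gamma> cs | cs. correspondence \<beta> \<gamma> cs}"

definition C_set :: "(real \<times> real) set \<Rightarrow> real set" where
  "C_set \<beta> = {0..IP_mass \<beta>} - (\<Union>(a,b)\<in>\<beta>. {a<..<b})"

definition hausdorff_dist :: "real set \<Rightarrow> real set \<Rightarrow> real" where
  "hausdorff_dist S T = max (SUP x\<in>S. infdist x T) (SUP y\<in>T. infdist y S)"

definition d_H :: "(real \<times> real) set \<Rightarrow> (real \<times> real) set \<Rightarrow> real" where
  "d_H \<beta> \<gamma> = hausdorff_dist (C_set \<beta>) (C_set \<gamma>)"

text \<open>Integral of f against M(beta) = sum_U Leb(U) delta_{D_beta(U)}.\<close>
definition M_integral :: "real \<Rightarrow> (real \<times> real) set \<Rightarrow> (real \<Rightarrow> real) \<Rightarrow> real" where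
  "M_integral \<alpha> \<beta> f = (\<Sum>\<^sub>\<infinity>U\<in>\<beta>. block_len U * f (block_div \<alpha> \<beta> U))"

text \<open>Decreasing order statistics (0-indexed: ranked beta k is the (k+1)-st largest
  block length with multiplicity, 0 if there are at most k blocks):
  x_{k+1} = inf { x > 0 : #{U : Leb U > x} < k+1 }.\<close>
definition ranked :: "(real \<times> real) set \<Rightarrow> nat \<Rightarrow> real" where
  "ranked \<beta> k = Inf {x. x > 0 \<and> card {U\<in>\<beta>. block_len U > x} \<le> k}"

definition cont_wrt :: "'a set \<Rightarrow> ('a \<Rightarrow> 'a \<Rightarrow> real) \<Rightarrow> ('b \<Rightarrow> 'b \<Rightarrow> real) \<Rightarrow> ('a \<Rightarrow> 'b) \<Rightarrow> bool" where
  "cont_wrt A d e f \<longleftrightarrow>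
     (\<forall>x\<in>A. \<forall>\<epsilon>>0. \<exists>\<delta>>0. \<forall>y\<in>A. d x y < \<delta> \<longrightarrow> e (f x) (f y) < \<epsilon>)"

end

theory Submission
  imports Defs
begin


lemma ip_block:
  assumes "interval_partition \<beta>" "U \<in> \<beta>"
  shows "0 \<le> fst U" "fst U < snd U"
  using assms unfolding interval_partition_def by (auto simp: case_prod_beta)

lemma ip_disj:
  assumes "interval_partition \<beta>" "U \<in> \<beta>" "V \<in> \<beta>" "U \<noteq> V" "fst U \<le> fst V"
  shows "snd U \<le> fst V"
proof (rule ccontr)
  assume c: "\<not> snd U \<le> fst V"
  have d: "{fst U<..<snd U} \<inter> {fst V<..<snd V} = {}"
    using assms unfolding interval_partition_def by blast
  have "fst V < snd V" using ip_block[OF assms(1,3)] by simp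
  define m where "m = (fst V + min (snd U) (snd V)) / 2"
  have "m \<in> {fst U<..<snd U} \<inter> {fst V<..<snd V}"
    using c assms(5) \<open>fst V < snd V\<close> unfolding m_def by auto
  with d show False by blast
qed

lemma sum_len_le_aux:
  assumes "finite F" "\<forall>U\<in>F. 0 \<le> fst U \<and> fst U < snd U \<and> snd U \<le> L"
    "\<forall>U\<in>F. \<forall>V\<in>F. U \<noteq> V \<and> fst U \<le> fst V \<longrightarrow> snd U \<le> fst V" "0 \<le> L"
  shows "(\<Sum>U\<in>F. block_len U) \<le> L"
  using assms
proof (induction "card F" arbitrary: F L rule: less_induct)
  case less
  show ?case
  proof (cases "F = {}")
    case True then show ?thesis using less by simp
  next
    case False
    have "Max (fst ` F) \<in> fst ` F" by (rule Max_in) (use False less.prems(1) in auto)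
    then obtain U where U: "U \<in> F" "fst U = Max (fst ` F)" by auto
    have ge: "fst V \<le> fst U" if "V \<in> F" for V
      using U that less.prems(1) by simp
    have IH: "(\<Sum>V\<in>F - {U}. block_len V) \<le> fst U"
    proof (rule less.hyps)
      show "card (F - {U}) < card F" using U less.prems(1) by (meson card_Diff1_less)
      show "\<forall>V\<in>F - {U}. 0 \<le> fst V \<and> fst V < snd V \<and> snd V \<le> fst U"
      proof
        fix V assume V: "V \<in> F - {U}"
        then have "snd V \<le> fst U" using less.prems(3) ge[of V] U(1) by blast
        then show "0 \<le> fst V \<and> fst V < snd V \<and> snd V \<le> fst U" using V less.prems(2) by blast
      qed
      show "\<forall>V\<in>F - {U}. \<forall>W\<in>F - {U}. V \<noteq> W \<and> fst V \<le> fst W \<longrightarrow> snd V \<le> fst W"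
        using less.prems(3) by blast
      show "0 \<le> fst U" using less.prems(2) U by blast
    qed (use less.prems in auto)
    have "(\<Sum>V\<in>F. block_len V) = block_len U + (\<Sum>V\<in>F - {U}. block_len V)"
      using U less.prems(1) by (simp add: sum.remove)
    also have "\<dots> \<le> L" using IH U less.prems(2) unfolding block_len_def by force
    finally show ?thesis .
  qed
qed

lemma ip_witness:
  assumes "interval_partition \<beta>"
  obtains L where "\<forall>U\<in>\<beta>. snd U \<le> L" "0 \<le> L"
    "{0..L} - (\<Union>(a,b)\<in>\<beta>. {a<..<b}) \<in> null_sets lborel"
proof -
  obtain L where L: "\<forall>(a,b)\<in>\<beta>. b \<le> L" "{0..L} - (\<Union>(a,b)\<in>\<beta>. {a<..<b}) \<in> null_sets lborel"
    using assms unfolding interval_partition_def by blast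
  show ?thesis
  proof (cases "\<beta> = {}")
    case True then show ?thesis by (intro that[of 0]) (auto intro: countable_imp_null_set_lborel)
  next
    case False
    then obtain U where "U \<in> \<beta>" by blast
    then have "0 \<le> L" using ip_block[OF assms] L(1) by (cases U) force
    then show ?thesis using that[of L] L by (auto simp: case_prod_beta)
  qed
qed

lemma ip_mass_eq:
  assumes "interval_partition \<beta>" "\<beta> \<noteq> {}"
    "\<forall>U\<in>\<beta>. snd U \<le> L" "{0..L} - (\<Union>(a,b)\<in>\<beta>. {a<..<b}) \<in> null_sets lborel"
  shows "IP_mass \<beta> = L"
  unfolding IP_mass_def
proof (rule the_equality)
  show "(\<forall>(a,b)\<in>\<beta>. b \<le> L) \<and> {0..L} - (\<Union>(a,b)\<in>\<beta>. {a<..<b}) \<in> null_sets lborel"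
    using assms by auto
next
  have key: "L2 \<le> L1" if "\<forall>U\<in>\<beta>. snd U \<le> L1" "{0..L2} - (\<Union>(a,b)\<in>\<beta>. {a<..<b}) \<in> null_sets lborel"
    for L1 L2
  proof (rule ccontr)
    assume "\<not> L2 \<le> L1"
    obtain U where U: "U \<in> \<beta>" using assms(2) by blast
    have "0 \<le> fst U" "fst U < snd U" using ip_block[OF assms(1) U] by auto
    then have "0 < L1" using that(1) U by force
    have sub: "{L1<..<L2} \<subseteq> {0..L2} - (\<Union>(a,b)\<in>\<beta>. {a<..<b})"
      using that(1) \<open>0 < L1\<close> by fastforce
    have "{L1<..<L2} \<in> null_sets lborel"
      by (rule null_sets_subset[OF that(2)]) (use sub in auto)
    then have "emeasure lborel {L1<..<L2} = 0" by (rule null_setsD1)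
    then show False using \<open>\<not> L2 \<le> L1\<close> by (simp add: emeasure_lborel_Ioo)
  qed
  fix L' assume "(\<forall>(a,b)\<in>\<beta>. b \<le> L') \<and> {0..L'} - (\<Union>(a,b)\<in>\<beta>. {a<..<b}) \<in> null_sets lborel"
  then show "L' = L" using key[of L' L] key[of L L'] assms by (auto simp: case_prod_beta)
qed



lemma ip_mass_props:
  assumes "interval_partition \<beta>" "\<beta> \<noteq> {}"
  shows "\<forall>U\<in>\<beta>. snd U \<le> IP_mass \<beta>" "0 \<le> IP_mass \<beta>"
    "{0..IP_mass \<beta>} - (\<Union>(a,b)\<in>\<beta>. {a<..<b}) \<in> null_sets lborel"
proof -
  obtain L where L: "\<forall>U\<in>\<beta>. snd U \<le> L" "0 \<le> L"
    "{0..L} - (\<Union>(a,b)\<in>\<beta>. {a<..<b}) \<in> null_sets lborel"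
    using ip_witness[OF assms(1)] by blast
  have "IP_mass \<beta> = L" using ip_mass_eq[OF assms L(1) L(3)] .
  then show "\<forall>U\<in>\<beta>. snd U \<le> IP_mass \<beta>" "0 \<le> IP_mass \<beta>"
    "{0..IP_mass \<beta>} - (\<Union>(a,b)\<in>\<beta>. {a<..<b}) \<in> null_sets lborel" using L by auto
qed

lemma sum_len_le_L:
  assumes "interval_partition \<beta>" "finite F" "F \<subseteq> \<beta>" "\<forall>U\<in>\<beta>. snd U \<le> L" "0 \<le> L"
  shows "(\<Sum>U\<in>F. block_len U) \<le> L"
proof (rule sum_len_le_aux[OF assms(2) _ _ assms(5)])
  show "\<forall>U\<in>F. 0 \<le> fst U \<and> fst U < snd U \<and> snd U \<le> L"
    using assms(3,4) ip_block[OF assms(1)] by blast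
  show "\<forall>U\<in>F. \<forall>V\<in>F. U \<noteq> V \<and> fst U \<le> fst V \<longrightarrow> snd U \<le> fst V"
    using assms(3) ip_disj[OF assms(1)] by blast
qed

lemma sum_len_le:
  assumes "interval_partition \<beta>" "finite F" "F \<subseteq> \<beta>" "\<beta> \<noteq> {}"
  shows "(\<Sum>U\<in>F. block_len U) \<le> IP_mass \<beta>"
  using sum_len_le_L[OF assms(1-3)] ip_mass_props[OF assms(1,4)] by blast

lemma len_pos: "interval_partition \<beta> \<Longrightarrow> U \<in> \<beta> \<Longrightarrow> 0 < block_len U"
  using ip_block[of \<beta> U] unfolding block_len_def by auto

lemma finite_long:
  assumes "interval_partition \<beta>" "0 < x"
  shows "finite {U\<in>\<beta>. x < block_len U}"
proof (rule ccontr)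
  assume inf: "infinite {U\<in>\<beta>. x < block_len U}"
  obtain L where L: "\<forall>U\<in>\<beta>. snd U \<le> L" "0 \<le> L"
    using ip_witness[OF assms(1)] by blast
  define n where "n = Suc (nat \<lceil>L / x\<rceil>)"
  obtain B where B: "finite B" "card B = n" "B \<subseteq> {U\<in>\<beta>. x < block_len U}"
    using infinite_arbitrarily_large[OF inf] by blast
  have "(\<Sum>U\<in>B. x) \<le> (\<Sum>U\<in>B. block_len U)"
    using B(3) by (intro sum_mono) auto
  also have "\<dots> \<le> L" using sum_len_le_L[OF assms(1) B(1) _ L] B(3) by blast
  finally have "real n * x \<le> L" using B(2) by simp
  moreover have "L / x < real n" unfolding n_def by linarith
  then have "L < real n * x" using assms(2) by (simp add: field_simps)
  ultimately show False by simp
qed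

lemma len_summable:
  assumes "interval_partition \<beta>"
  shows "block_len summable_on \<beta>"
proof -
  obtain L where L: "\<forall>U\<in>\<beta>. snd U \<le> L" "0 \<le> L"
    using ip_witness[OF assms(1)] by blast
  show ?thesis
  proof (rule nonneg_bdd_above_summable_on)
    show "\<And>x. x \<in> \<beta> \<Longrightarrow> 0 \<le> block_len x" using len_pos[OF assms] less_imp_le by blast
    show "bdd_above (sum block_len ` {F. F \<subseteq> \<beta> \<and> finite F})"
    proof (rule bdd_aboveI2)
      fix F assume "F \<in> {F. F \<subseteq> \<beta> \<and> finite F}"
      then show "sum block_len F \<le> L" using sum_len_le_L[OF assms _ _ L] by blast
    qed
  qed
qed

lemma div_count_nonneg: "0 \<le> h \<Longrightarrow> 0 \<le> div_count \<alpha> \<beta> t h"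
  unfolding div_count_def by simp

lemma div_count_mono:
  assumes "interval_partition \<beta>" "0 < h" "t \<le> T"
  shows "div_count \<alpha> \<beta> t h \<le> div_count \<alpha> \<beta> T h"
proof -
  have fin: "finite {(a,b)\<in>\<beta>. b - a > h \<and> b \<le> T}"
    by (rule finite_subset[OF _ finite_long[OF assms(1,2)]]) (auto simp: block_len_def)
  have "card {(a,b)\<in>\<beta>. b - a > h \<and> b \<le> t} \<le> card {(a,b)\<in>\<beta>. b - a > h \<and> b \<le> T}"
    by (rule card_mono[OF fin]) (use assms(3) in auto)
  then show ?thesis unfolding div_count_def by (intro mult_left_mono) auto
qed

lemma div_lim:
  assumes "diversity_property \<alpha> \<beta>" "t \<in> {0..IP_mass \<beta>}"
  shows "(div_count \<alpha> \<beta> t \<longlongrightarrow> Lim (at_right 0) (div_count \<alpha> \<beta> t)) (at_right 0)"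
proof -
  obtain l where "(div_count \<alpha> \<beta> t \<longlongrightarrow> l) (at_right 0)"
    using assms unfolding diversity_property_def by blast
  moreover then have "Lim (at_right 0) (div_count \<alpha> \<beta> t) = l"
    by (intro tendsto_Lim) auto
  ultimately show ?thesis by simp
qed

lemma Lim_nonneg:
  assumes "diversity_property \<alpha> \<beta>" "t \<in> {0..IP_mass \<beta>}"
  shows "0 \<le> Lim (at_right 0) (div_count \<alpha> \<beta> t)"
proof (rule tendsto_lowerbound[OF div_lim[OF assms]])
  show "\<forall>\<^sub>F x in at_right 0. 0 \<le> div_count \<alpha> \<beta> t x"
    using eventually_at_right_less[of "0::real"] by eventually_elim (simp add: div_count_nonneg)
qed simp

lemma Lim_mono:
  assumes "interval_partition \<beta>" "diversity_property \<alpha> \<beta>" "t \<in> {0..IP_mass \<beta>}"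
    "T \<in> {0..IP_mass \<beta>}" "t \<le> T"
  shows "Lim (at_right 0) (div_count \<alpha> \<beta> t) \<le> Lim (at_right 0) (div_count \<alpha> \<beta> T)"
proof (rule tendsto_le[OF _ div_lim[OF assms(2,4)] div_lim[OF assms(2,3)]])
  show "\<forall>\<^sub>F x in at_right 0. div_count \<alpha> \<beta> t x \<le> div_count \<alpha> \<beta> T x"
    using div_count_mono[OF assms(1) _ assms(5)] eventually_at_right_less[of 0] 
    by (auto elim!: eventually_mono)
qed simp

lemma diversity_nonneg:
  assumes "0 < \<alpha>" "\<alpha> < 1" "diversity_property \<alpha> \<beta>" "t \<in> {0..IP_mass \<beta>}"
  shows "0 \<le> diversity \<alpha> \<beta> t"
  unfolding diversity_def using Lim_nonneg[OF assms(3,4)] assms(2) by simp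

lemma block_in_range:
  assumes "interval_partition \<beta>" "U \<in> \<beta>"
  shows "(fst U + snd U) / 2 \<in> {0..IP_mass \<beta>}"
  using ip_mass_props[OF assms(1)] ip_block[OF assms] assms(2) by fastforce

lemma block_div_bounds:
  assumes "0 < \<alpha>" "\<alpha> < 1" "\<beta> \<in> I_alpha \<alpha>" "U \<in> \<beta>"
  shows "0 \<le> block_div \<alpha> \<beta> U" "block_div \<alpha> \<beta> U \<le> total_div \<alpha> \<beta>"
proof -
  have ip: "interval_partition \<beta>" and dp: "diversity_property \<alpha> \<beta>"
    using assms(3) unfolding I_alpha_def by auto
  have r: "(fst U + snd U) / 2 \<in> {0..IP_mass \<beta>}" using block_in_range[OF ip assms(4)] .
  have R: "IP_mass \<beta> \<in> {0..IP_mass \<beta>}" using r by auto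
  show "0 \<le> block_div \<alpha> \<beta> U" unfolding block_div_def using diversity_nonneg[OF assms(1,2) dp r] .
  show "block_div \<alpha> \<beta> U \<le> total_div \<alpha> \<beta>"
    unfolding block_div_def total_div_def diversity_def
    using Lim_mono[OF ip dp r R] r assms(2) by (intro mult_left_mono) auto
qed



lemma sorted_wrt_strict_distinct:
  assumes "sorted_wrt (\<lambda>x y. f x < (f y::real)) xs" shows "distinct xs"
  using assms by (induction xs) auto

lemma corr_props:
  assumes "correspondence \<beta> \<gamma> cs"
  shows "distinct (map fst cs)" "distinct (map snd cs)"
    "fst ` set cs \<subseteq> \<beta>" "snd ` set cs \<subseteq> \<gamma>"
proof -
  have "sorted_wrt (\<lambda>x y. fst x < fst y) (map fst cs)"
    using assms unfolding correspondence_def by (simp add: sorted_wrt_map)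
  then show "distinct (map fst cs)" by (rule sorted_wrt_strict_distinct)
  have "sorted_wrt (\<lambda>x y. fst x < fst y) (map snd cs)"
    using assms unfolding correspondence_def by (simp add: sorted_wrt_map)
  then show "distinct (map snd cs)" by (rule sorted_wrt_strict_distinct)
  show "fst ` set cs \<subseteq> \<beta>" "snd ` set cs \<subseteq> \<gamma>"
    using assms unfolding correspondence_def by auto
qed

lemma sum_fst_list:
  assumes "correspondence \<beta> \<gamma> cs"
  shows "(\<Sum>p\<leftarrow>cs. g (fst p)) = (\<Sum>U\<in>fst ` set cs. g U)"
    "(\<Sum>p\<leftarrow>cs. g (snd p)) = (\<Sum>U\<in>snd ` set cs. g U)"
proof -
  have "(\<Sum>p\<leftarrow>cs. g (fst p)) = (\<Sum>U\<leftarrow>map fst cs. g U)" by (simp add: o_def)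
  also have "\<dots> = (\<Sum>U\<in>set (map fst cs). g U)"
    using corr_props(1)[OF assms] by (rule sum_list_distinct_conv_sum_set)
  finally show "(\<Sum>p\<leftarrow>cs. g (fst p)) = (\<Sum>U\<in>fst ` set cs. g U)" by simp
  have "(\<Sum>p\<leftarrow>cs. g (snd p)) = (\<Sum>U\<leftarrow>map snd cs. g U)" by (simp add: o_def)
  also have "\<dots> = (\<Sum>U\<in>set (map snd cs). g U)"
    using corr_props(2)[OF assms] by (rule sum_list_distinct_conv_sum_set)
  finally show "(\<Sum>p\<leftarrow>cs. g (snd p)) = (\<Sum>U\<in>snd ` set cs. g U)" by simp
qed

definition sdiff :: "((real \<times> real) \<times> (real \<times> real)) list \<Rightarrow> real" where
  "sdiff cs = (\<Sum>p\<leftarrow>cs. \<bar>block_len (fst p) - block_len (snd p)\<bar>)"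

lemma sdiff_nonneg: "0 \<le> sdiff cs"
  unfolding sdiff_def by (induction cs) auto

lemma distortion_ge:
  fixes cs \<alpha> \<beta> \<gamma>
  defines "D \<equiv> distortion \<alpha> \<beta> \<gamma> cs"
  shows "sdiff cs + IP_mass \<beta> - (\<Sum>p\<leftarrow>cs. block_len (fst p)) \<le> D"
    "sdiff cs + IP_mass \<gamma> - (\<Sum>p\<leftarrow>cs. block_len (snd p)) \<le> D"
    "\<bar>total_div \<alpha> \<beta> - total_div \<alpha> \<gamma>\<bar> \<le> D"
    "\<And>p. p \<in> set cs \<Longrightarrow> \<bar>block_div \<alpha> \<beta> (fst p) - block_div \<alpha> \<gamma> (snd p)\<bar> \<le> D"
    "0 \<le> D"
proof -
  let ?S = "{ sdiff cs + IP_mass \<beta> - (\<Sum>p\<leftarrow>cs. block_len (fst p)),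
             sdiff cs + IP_mass \<gamma> - (\<Sum>p\<leftarrow>cs. block_len (snd p)),
             \<bar>total_div \<alpha> \<beta> - total_div \<alpha> \<gamma>\<bar> } \<union>
           (\<lambda>p. \<bar>block_div \<alpha> \<beta> (fst p) - block_div \<alpha> \<gamma> (snd p)\<bar>) ` set cs"
  have DS: "D = Max ?S" unfolding D_def distortion_def sdiff_def Let_def by simp
  have fin: "finite ?S" by simp
  have le: "x \<le> D" if "x \<in> ?S" for x unfolding DS using Max_ge[OF fin that] .
  show "sdiff cs + IP_mass \<beta> - (\<Sum>p\<leftarrow>cs. block_len (fst p)) \<le> D"
    "sdiff cs + IP_mass \<gamma> - (\<Sum>p\<leftarrow>cs. block_len (snd p)) \<le> D"
    "\<bar>total_div \<alpha> \<beta> - total_div \<alpha> \<gamma>\<bar> \<le> D" by (auto intro!: le)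
  show "\<And>p. p \<in> set cs \<Longrightarrow> \<bar>block_div \<alpha> \<beta> (fst p) - block_div \<alpha> \<gamma> (snd p)\<bar> \<le> D"
    by (auto intro!: le)
  have "\<bar>total_div \<alpha> \<beta> - total_div \<alpha> \<gamma>\<bar> \<le> D" by (auto intro!: le)
  then show "0 \<le> D" by linarith
qed

lemma sum_matched_le:
  assumes "interval_partition \<beta>" "correspondence \<beta> \<gamma> cs"
  shows "(\<Sum>p\<leftarrow>cs. block_len (fst p)) \<le> max 0 (IP_mass \<beta>)"
proof (cases "\<beta> = {}")
  case True
  then have "cs = []" using corr_props(3)[OF assms(2)] by auto
  then show ?thesis by simp
next
  case False
  show ?thesis unfolding sum_fst_list[OF assms(2)]
    using sum_len_le[OF assms(1) _ corr_props(3)[OF assms(2)] False] by simp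
qed

lemma unmatched_fst:
  assumes "interval_partition \<beta>" "correspondence \<beta> \<gamma> cs"
    "finite F" "F \<subseteq> \<beta> - fst ` set cs"
  shows "(\<Sum>U\<in>F. block_len U) \<le> distortion \<alpha> \<beta> \<gamma> cs - sdiff cs"
proof (cases "\<beta> = {}")
  case True
  then have "F = {}" using assms(4) by auto
  then show ?thesis using distortion_ge(3)[where cs=cs and \<alpha>=\<alpha> and \<beta>=\<beta> and \<gamma>=\<gamma>] True corr_props(3)[OF assms(2)]
    by (auto simp: sdiff_def)
next
  case False
  let ?A = "fst ` set cs"
  have "(\<Sum>U\<in>F. block_len U) + (\<Sum>U\<in>?A. block_len U) = (\<Sum>U\<in>F \<union> ?A. block_len U)"
    using assms(3,4) by (intro sum.union_disjoint[symmetric]) auto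
  also have "\<dots> \<le> IP_mass \<beta>"
  proof (rule sum_len_le[OF assms(1) _ _ False])
    show "finite (F \<union> ?A)" using assms(3) by simp
    show "F \<union> ?A \<subseteq> \<beta>" using assms(4) corr_props(3)[OF assms(2)] by blast
  qed
  finally show ?thesis using distortion_ge(1)[where cs=cs and \<alpha>=\<alpha> and \<beta>=\<beta> and \<gamma>=\<gamma>] sum_fst_list(1)[OF assms(2), of block_len] by simp
qed

lemma corr_swap_ip:
  assumes "correspondence \<beta> \<gamma> cs"
  shows "correspondence \<gamma> \<beta> (map (\<lambda>p. (snd p, fst p)) cs)"
  using assms unfolding correspondence_def by (auto simp: sorted_wrt_map)

lemma unmatched_snd:
  assumes "interval_partition \<gamma>" "correspondence \<beta> \<gamma> cs"
    "finite F" "F \<subseteq> \<gamma> - snd ` set cs"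
  shows "(\<Sum>U\<in>F. block_len U) \<le> distortion \<alpha> \<beta> \<gamma> cs - sdiff cs"
proof (cases "\<gamma> = {}")
  case True
  then have "F = {}" using assms(4) by auto
  then show ?thesis using distortion_ge(3)[where cs=cs and \<alpha>=\<alpha> and \<beta>=\<beta> and \<gamma>=\<gamma>] True corr_props(4)[OF assms(2)]
    by (auto simp: sdiff_def)
next
  case False
  let ?A = "snd ` set cs"
  have "(\<Sum>U\<in>F. block_len U) + (\<Sum>U\<in>?A. block_len U) = (\<Sum>U\<in>F \<union> ?A. block_len U)"
    using assms(3,4) by (intro sum.union_disjoint[symmetric]) auto
  also have "\<dots> \<le> IP_mass \<gamma>"
  proof (rule sum_len_le[OF assms(1) _ _ False])
    show "finite (F \<union> ?A)" using assms(3) by simp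
    show "F \<union> ?A \<subseteq> \<gamma>" using assms(4) corr_props(4)[OF assms(2)] by blast
  qed
  finally show ?thesis using distortion_ge(2)[where cs=cs and \<alpha>=\<alpha> and \<beta>=\<beta> and \<gamma>=\<gamma>] sum_fst_list(2)[OF assms(2), of block_len] by simp
qed

lemma corr_nil: "correspondence \<beta> \<gamma> []"
  unfolding correspondence_def by simp

lemma d_alpha_le:
  assumes "correspondence \<beta> \<gamma> cs"
  shows "d_alpha \<alpha> \<beta> \<gamma> \<le> distortion \<alpha> \<beta> \<gamma> cs"
  unfolding d_alpha_def
proof (rule cInf_lower)
  show "distortion \<alpha> \<beta> \<gamma> cs \<in> {distortion \<alpha> \<beta> \<gamma> cs |cs. correspondence \<beta> \<gamma> cs}"
    using assms by blast
  show "bdd_below {distortion \<alpha> \<beta> \<gamma> cs |cs. correspondence \<beta> \<gamma> cs}"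
    by (rule bdd_belowI[of _ 0]) (auto intro: distortion_ge(5))
qed

lemma d_alpha_lessD:
  assumes "d_alpha \<alpha> \<beta> \<gamma> < \<delta>"
  obtains cs where "correspondence \<beta> \<gamma> cs" "distortion \<alpha> \<beta> \<gamma> cs < \<delta>"
proof -
  have ne: "{distortion \<alpha> \<beta> \<gamma> cs |cs. correspondence \<beta> \<gamma> cs} \<noteq> {}"
    using corr_nil by blast
  from cInf_lessD[OF ne assms[unfolded d_alpha_def]] show ?thesis using that by blast
qed

lemma total_div_cont: "cont_wrt A (d_alpha \<alpha>) dist (total_div \<alpha>)"
  unfolding cont_wrt_def
proof (intro ballI allI impI)
  fix x y and \<epsilon> :: real assume "0 < \<epsilon>"
  show "\<exists>\<delta>>0. \<forall>y\<in>A. d_alpha \<alpha> x y < \<delta> \<longrightarrow> dist (total_div \<alpha> x) (total_div \<alpha> y) < \<epsilon>"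
  proof (intro exI[of _ \<epsilon>] conjI ballI impI)
    fix y assume "d_alpha \<alpha> x y < \<epsilon>"
    then obtain cs where "correspondence x y cs" "distortion \<alpha> x y cs < \<epsilon>" by (rule d_alpha_lessD)
    then show "dist (total_div \<alpha> x) (total_div \<alpha> y) < \<epsilon>"
      using distortion_ge(3)[where cs=cs and \<alpha>=\<alpha> and \<beta>=x and \<gamma>=y] by (simp add: dist_real_def)
  qed fact
qed



lemma rest_bound:
  fixes g :: "real \<times> real \<Rightarrow> real"
  assumes "interval_partition \<beta>" "\<And>U. U \<in> \<beta> \<Longrightarrow> \<bar>g U\<bar> \<le> B * block_len U" "0 \<le> B"
    "S \<subseteq> \<beta>" "\<And>F. finite F \<Longrightarrow> F \<subseteq> S \<Longrightarrow> (\<Sum>U\<in>F. block_len U) \<le> E"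
  shows "g summable_on S" "\<bar>infsum g S\<bar> \<le> B * E"
proof -
  have ls: "block_len summable_on S"
    using summable_on_subset_banach[OF len_summable[OF assms(1)] assms(4)] .
  have bls: "(\<lambda>U. B * block_len U) summable_on S"
    using ls by (rule summable_on_cmult_right)
  have ab: "(\<lambda>U. norm (g U)) summable_on S"
  proof (rule summable_on_comparison_test[OF bls])
    show "\<And>x. x \<in> S \<Longrightarrow> norm (g x) \<le> B * block_len x" using assms(2,4) by auto
  qed simp
  then show "g summable_on S" by (rule abs_summable_summable)
  have "\<bar>infsum g S\<bar> \<le> infsum (\<lambda>U. norm (g U)) S"
    using norm_infsum_bound[OF ab] by simp
  also have "\<dots> \<le> infsum (\<lambda>U. B * block_len U) S"
    by (rule infsum_mono[OF ab bls]) (use assms(2,4) in auto)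
  also have "\<dots> = B * infsum block_len S" by (rule infsum_cmult_right) (use ls in auto)
  also have "\<dots> \<le> B * E"
    by (intro mult_left_mono infsum_le_finite_sums ls assms(5) assms(3))
  finally show "\<bar>infsum g S\<bar> \<le> B * E" .
qed

lemma decomp:
  fixes g :: "real \<times> real \<Rightarrow> real"
  assumes "interval_partition \<beta>" "\<And>U. U \<in> \<beta> \<Longrightarrow> \<bar>g U\<bar> \<le> B * block_len U" "0 \<le> B"
    "A \<subseteq> \<beta>" "finite A"
  shows "infsum g \<beta> = sum g A + infsum g (\<beta> - A)"
proof -
  obtain L where L: "\<forall>U\<in>\<beta>. snd U \<le> L" "0 \<le> L"
    using ip_witness[OF assms(1)] by blast
  have s1: "g summable_on (\<beta> - A)"
    by (rule rest_bound(1)[OF assms(1,2,3), of _ L]) (use sum_len_le_L[OF assms(1) _ _ L] in auto)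
  have "infsum g \<beta> = infsum g (A \<union> (\<beta> - A))" using assms(4) by (simp add: Un_absorb1)
  also have "\<dots> = infsum g A + infsum g (\<beta> - A)"
    by (rule infsum_Un_disjoint) (use s1 assms(5) in auto)
  finally show ?thesis using assms(5) by simp
qed

lemma M_diff_bound:
  fixes f :: "real \<Rightarrow> real"
  assumes a: "0 < \<alpha>" "\<alpha> < 1" and bI: "\<beta> \<in> I_alpha \<alpha>" and gI: "\<gamma> \<in> I_alpha \<alpha>"
    and cs: "correspondence \<beta> \<gamma> cs"
    and B: "\<And>x. 0 \<le> x \<Longrightarrow> \<bar>f x\<bar> \<le> B" "0 \<le> B"
    and w: "\<And>p. p \<in> set cs \<Longrightarrow> \<bar>f (block_div \<alpha> \<beta> (fst p)) - f (block_div \<alpha> \<gamma> (snd p))\<bar> \<le> w" "0 \<le> w"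
  shows "\<bar>M_integral \<alpha> \<beta> f - M_integral \<alpha> \<gamma> f\<bar>
     \<le> 2 * B * distortion \<alpha> \<beta> \<gamma> cs + w * (max 0 (IP_mass \<beta>) + distortion \<alpha> \<beta> \<gamma> cs)"
proof -
  have ipb: "interval_partition \<beta>" and ipg: "interval_partition \<gamma>"
    using bI gI unfolding I_alpha_def by auto
  define D where "D = distortion \<alpha> \<beta> \<gamma> cs"
  define s where "s = sdiff cs"
  define gb where "gb = (\<lambda>U. block_len U * f (block_div \<alpha> \<beta> U))"
  define gg where "gg = (\<lambda>U. block_len U * f (block_div \<alpha> \<gamma> U))"
  let ?A = "fst ` set cs" and ?B = "snd ` set cs"
  have gbb: "\<bar>gb U\<bar> \<le> B * block_len U" if "U \<in> \<beta>" for U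
  proof -
    have "0 \<le> block_div \<alpha> \<beta> U" using block_div_bounds(1)[OF a bI that] .
    then have "\<bar>f (block_div \<alpha> \<beta> U)\<bar> \<le> B" by (rule B(1))
    then show ?thesis using len_pos[OF ipb that] unfolding gb_def
      by (simp add: abs_mult mult.commute mult_left_mono)
  qed
  have ggb: "\<bar>gg U\<bar> \<le> B * block_len U" if "U \<in> \<gamma>" for U
  proof -
    have "0 \<le> block_div \<alpha> \<gamma> U" using block_div_bounds(1)[OF a gI that] .
    then have "\<bar>f (block_div \<alpha> \<gamma> U)\<bar> \<le> B" by (rule B(1))
    then show ?thesis using len_pos[OF ipg that] unfolding gg_def
      by (simp add: abs_mult mult.commute mult_left_mono)
  qed
  have Mb: "M_integral \<alpha> \<beta> f = (\<Sum>p\<leftarrow>cs. gb (fst p)) + infsum gb (\<beta> - ?A)"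
    unfolding M_integral_def gb_def[symmetric] sum_fst_list(1)[OF cs]
    by (rule decomp[OF ipb gbb B(2) corr_props(3)[OF cs]]) auto
  have Mg: "M_integral \<alpha> \<gamma> f = (\<Sum>p\<leftarrow>cs. gg (snd p)) + infsum gg (\<gamma> - ?B)"
    unfolding M_integral_def gg_def[symmetric] sum_fst_list(2)[OF cs]
    by (rule decomp[OF ipg ggb B(2) corr_props(4)[OF cs]]) auto
  have Rb: "\<bar>infsum gb (\<beta> - ?A)\<bar> \<le> B * (D - s)"
    by (rule rest_bound(2)[OF ipb gbb B(2)]) (use unmatched_fst[OF ipb cs] in \<open>auto simp: D_def s_def\<close>)
  have Rg: "\<bar>infsum gg (\<gamma> - ?B)\<bar> \<le> B * (D - s)"
    by (rule rest_bound(2)[OF ipg ggb B(2)]) (use unmatched_snd[OF ipg cs] in \<open>auto simp: D_def s_def\<close>)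
  have pt: "\<bar>gb (fst p) - gg (snd p)\<bar>
      \<le> B * \<bar>block_len (fst p) - block_len (snd p)\<bar> + w * block_len (snd p)" if p: "p \<in> set cs" for p
  proof -
    let ?x = "block_div \<alpha> \<beta> (fst p)" and ?y = "block_div \<alpha> \<gamma> (snd p)"
    have fb: "\<bar>f ?x\<bar> \<le> B"
      using B(1) block_div_bounds(1)[OF a bI] corr_props(3)[OF cs] p by blast
    have vpos: "0 \<le> block_len (snd p)"
      using len_pos[OF ipg] corr_props(4)[OF cs] p by (meson image_subset_iff less_imp_le)
    have "gb (fst p) - gg (snd p)
       = (block_len (fst p) - block_len (snd p)) * f ?x + block_len (snd p) * (f ?x - f ?y)"
      unfolding gb_def gg_def by (simp add: algebra_simps)
    also have "\<bar>\<dots>\<bar> \<le> \<bar>block_len (fst p) - block_len (snd p)\<bar> * \<bar>f ?x\<bar> + block_len (snd p) * \<bar>f ?x - f ?y\<bar>"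
      using vpos by (simp add: abs_mult abs_triangle_ineq order_trans[OF abs_triangle_ineq])
    also have "\<dots> \<le> \<bar>block_len (fst p) - block_len (snd p)\<bar> * B + block_len (snd p) * w"
      using fb w(1)[OF p] vpos by (intro add_mono mult_left_mono) auto
    finally show ?thesis by (simp add: mult.commute)
  qed
  have sl: "\<bar>\<Sum>p\<leftarrow>cs. gb (fst p) - gg (snd p)\<bar>
     \<le> (\<Sum>p\<leftarrow>cs. B * \<bar>block_len (fst p) - block_len (snd p)\<bar> + w * block_len (snd p))"
    using pt
  proof (induction cs)
    case (Cons a xs)
    have "\<bar>\<Sum>p\<leftarrow>a # xs. gb (fst p) - gg (snd p)\<bar>
        \<le> \<bar>gb (fst a) - gg (snd a)\<bar> + \<bar>\<Sum>p\<leftarrow>xs. gb (fst p) - gg (snd p)\<bar>"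
      by (simp add: abs_triangle_ineq)
    also have "\<dots> \<le> (B * \<bar>block_len (fst a) - block_len (snd a)\<bar> + w * block_len (snd a))
       + (\<Sum>p\<leftarrow>xs. B * \<bar>block_len (fst p) - block_len (snd p)\<bar> + w * block_len (snd p))"
      using Cons by (intro add_mono) auto
    finally show ?case by simp
  qed simp
  have sv: "(\<Sum>p\<leftarrow>cs. block_len (snd p)) \<le> (\<Sum>p\<leftarrow>cs. block_len (fst p)) + s"
  proof -
    have "(\<Sum>p\<leftarrow>cs. block_len (snd p)) \<le> (\<Sum>p\<leftarrow>cs. block_len (fst p) + \<bar>block_len (fst p) - block_len (snd p)\<bar>)"
      by (intro sum_list_mono) auto
    then show ?thesis unfolding s_def sdiff_def by (simp add: sum_list_addf)
  qed
  have sum2: "(\<Sum>p\<leftarrow>cs. B * \<bar>block_len (fst p) - block_len (snd p)\<bar> + w * block_len (snd p))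
     = B * s + w * (\<Sum>p\<leftarrow>cs. block_len (snd p))"
    unfolding s_def sdiff_def by (simp add: sum_list_addf sum_list_const_mult)
  have sD: "s \<le> D"
  proof (cases "\<beta> = {}")
    case True
    then have "cs = []" using corr_props(3)[OF cs] by auto
    then show ?thesis using distortion_ge(5)[where cs=cs and \<alpha>=\<alpha> and \<beta>=\<beta> and \<gamma>=\<gamma>]
      unfolding D_def s_def sdiff_def by simp
  next
    case False
    have "(\<Sum>p\<leftarrow>cs. block_len (fst p)) \<le> IP_mass \<beta>"
      unfolding sum_fst_list(1)[OF cs] using sum_len_le[OF ipb _ corr_props(3)[OF cs] False] by simp
    then show ?thesis using distortion_ge(1)[where cs=cs and \<alpha>=\<alpha> and \<beta>=\<beta> and \<gamma>=\<gamma>]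
      unfolding D_def s_def by simp
  qed
  have "M_integral \<alpha> \<beta> f - M_integral \<alpha> \<gamma> f
     = (\<Sum>p\<leftarrow>cs. gb (fst p) - gg (snd p)) + infsum gb (\<beta> - ?A) - infsum gg (\<gamma> - ?B)"
    unfolding Mb Mg by (simp add: sum_list_subtractf)
  then have "\<bar>M_integral \<alpha> \<beta> f - M_integral \<alpha> \<gamma> f\<bar> \<le> B * s + w * (\<Sum>p\<leftarrow>cs. block_len (snd p)) + B * (D - s) + B * (D - s)"
    using sl sum2 Rb Rg by linarith
  also have "\<dots> \<le> 2 * B * D + w * (max 0 (IP_mass \<beta>) + D)"
  proof -
    have "w * (\<Sum>p\<leftarrow>cs. block_len (snd p)) \<le> w * (max 0 (IP_mass \<beta>) + D)"
      using sv sum_matched_le[OF ipb cs] sD w(2) by (intro mult_left_mono) auto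
    moreover have "0 \<le> B * s" using sdiff_nonneg[of cs] B(2) unfolding s_def by simp
    moreover have "B * (D - s) = B * D - B * s" "w * (max 0 (IP_mass \<beta>) + D) = w * max 0 (IP_mass \<beta>) + w * D"
      by (simp_all add: algebra_simps)
    ultimately show ?thesis by linarith
  qed
  finally show ?thesis unfolding D_def .
qed



lemma M_cont:
  fixes f :: "real \<Rightarrow> real"
  assumes a: "0 < \<alpha>" "\<alpha> < 1" and fc: "continuous_on {0..} f" and fb: "bounded (f ` {0..})"
  shows "cont_wrt (I_alpha \<alpha>) (d_alpha \<alpha>) dist (\<lambda>\<beta>. M_integral \<alpha> \<beta> f)"
  unfolding cont_wrt_def
proof (intro ballI allI impI)
  fix \<beta> and \<epsilon> :: real assume bI: "\<beta> \<in> I_alpha \<alpha>" and e: "0 < \<epsilon>"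
  obtain B0 where B0: "\<forall>x\<in>f ` {0..}. \<bar>x\<bar> \<le> B0" using fb unfolding bounded_real by blast
  define B where "B = max B0 0"
  have B: "\<And>x. 0 \<le> x \<Longrightarrow> \<bar>f x\<bar> \<le> B" "0 \<le> B" using B0 unfolding B_def by force+
  define T where "T = total_div \<alpha> \<beta>"
  define Lb where "Lb = max 0 (IP_mass \<beta>)"
  have Lb: "0 \<le> Lb" unfolding Lb_def by simp
  define e' where "e' = \<epsilon> / (2 * (Lb + 1))"
  have e': "0 < e'" unfolding e'_def using e Lb by simp
  have "uniformly_continuous_on {0..T+1} f"
    by (rule compact_uniformly_continuous[OF continuous_on_subset[OF fc]]) auto
  then obtain \<eta> where \<eta>: "\<eta> > 0" "\<And>x y. x \<in> {0..T+1} \<Longrightarrow> y \<in> {0..T+1} \<Longrightarrow> dist y x < \<eta> \<Longrightarrow> dist (f y) (f x) < e'"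
    unfolding uniformly_continuous_on_def using e' by metis
  define \<delta> where "\<delta> = min 1 (min \<eta> (\<epsilon> / (4 * B + 4)))"
  have \<delta>: "0 < \<delta>" unfolding \<delta>_def using \<eta> e B by auto
  show "\<exists>\<delta>>0. \<forall>\<gamma>\<in>I_alpha \<alpha>. d_alpha \<alpha> \<beta> \<gamma> < \<delta> \<longrightarrow> dist (M_integral \<alpha> \<beta> f) (M_integral \<alpha> \<gamma> f) < \<epsilon>"
  proof (intro exI[of _ \<delta>] conjI ballI impI \<delta>)
    fix \<gamma> assume gI: "\<gamma> \<in> I_alpha \<alpha>" and d: "d_alpha \<alpha> \<beta> \<gamma> < \<delta>"
    obtain cs where cs: "correspondence \<beta> \<gamma> cs" and D: "distortion \<alpha> \<beta> \<gamma> cs < \<delta>"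
      using d_alpha_lessD[OF d] by blast
    define D where "D = distortion \<alpha> \<beta> \<gamma> cs"
    have D0: "0 \<le> D" unfolding D_def by (rule distortion_ge(5))
    have w: "\<bar>f (block_div \<alpha> \<beta> (fst p)) - f (block_div \<alpha> \<gamma> (snd p))\<bar> \<le> e'" if p: "p \<in> set cs" for p
    proof -
      let ?x = "block_div \<alpha> \<beta> (fst p)" and ?y = "block_div \<alpha> \<gamma> (snd p)"
      have fp: "fst p \<in> \<beta>" and sp: "snd p \<in> \<gamma>" using corr_props(3,4)[OF cs] p by auto
      have x: "0 \<le> ?x" "?x \<le> T"
        using block_div_bounds[OF a bI fp] unfolding T_def by auto
      have y: "0 \<le> ?y" using block_div_bounds(1)[OF a gI sp] .
      have xy: "\<bar>?x - ?y\<bar> \<le> D" unfolding D_def by (rule distortion_ge(4)[OF p])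
      have "D < 1" "D < \<eta>" using D unfolding D_def \<delta>_def by auto
      then have "dist ?y ?x < \<eta>" "?y \<in> {0..T+1}" "?x \<in> {0..T+1}"
        using xy x y by (auto simp: dist_real_def)
      from \<eta>(2)[OF this(3,2,1)] show ?thesis by (simp add: dist_real_def abs_minus_commute)
    qed
    have "\<bar>M_integral \<alpha> \<beta> f - M_integral \<alpha> \<gamma> f\<bar> \<le> 2 * B * D + e' * (Lb + D)"
      unfolding D_def Lb_def by (rule M_diff_bound[OF a bI gI cs B w]) (use e' in auto)
    also have "\<dots> < \<epsilon>"
    proof -
      have D1: "D < 1" and D2: "D < \<epsilon> / (4 * B + 4)" using D unfolding D_def \<delta>_def by auto
      have "2 * B * D \<le> 2 * B * (\<epsilon> / (4 * B + 4))" using D2 B(2) by (intro mult_left_mono) auto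
      also have "\<dots> < \<epsilon> / 2" using B(2) e by (simp add: field_simps)
      finally have 1: "2 * B * D < \<epsilon> / 2" .
      have "e' * (Lb + D) < e' * (Lb + 1)" using D1 e' by simp
      also have "\<dots> = \<epsilon> / 2" unfolding e'_def using Lb by (simp add: field_simps)
      finally show ?thesis using 1 by linarith
    qed
    finally show "dist (M_integral \<alpha> \<beta> f) (M_integral \<alpha> \<gamma> f) < \<epsilon>" by (simp add: dist_real_def)
  qed
qed



definition Ncnt :: "(real \<times> real) set \<Rightarrow> real \<Rightarrow> nat" where
  "Ncnt S x = card {U\<in>S. x < block_len U}"

lemma ranked_facts:
  assumes ip: "interval_partition \<beta>"
  shows "0 \<le> ranked \<beta> k" "\<And>x. 0 < x \<Longrightarrow> x < ranked \<beta> k \<longleftrightarrow> k < Ncnt \<beta> x"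
proof -
  define S where "S = {x. x > 0 \<and> card {U\<in>\<beta>. block_len U > x} \<le> k}"
  have rk: "ranked \<beta> k = Inf S" unfolding ranked_def S_def ..
  obtain L where L: "\<forall>U\<in>\<beta>. snd U \<le> L" "0 \<le> L" using ip_witness[OF ip] by blast
  have e: "{U\<in>\<beta>. block_len U > L + 1} = {}"
    using L ip_block[OF ip] unfolding block_len_def by force
  have "L + 1 \<in> S" unfolding S_def using L(2) by (simp add: e)
  then have ne: "S \<noteq> {}" by blast
  have bb: "bdd_below S" unfolding S_def by (rule bdd_belowI[of _ 0]) auto
  show "0 \<le> ranked \<beta> k" unfolding rk by (rule cInf_greatest[OF ne]) (auto simp: S_def)
  fix x :: real assume x: "0 < x"
  show "x < ranked \<beta> k \<longleftrightarrow> k < Ncnt \<beta> x"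
  proof
    assume "x < ranked \<beta> k"
    show "k < Ncnt \<beta> x"
    proof (rule ccontr)
      assume "\<not> k < Ncnt \<beta> x"
      then have "x \<in> S" unfolding S_def Ncnt_def using x by auto
      then have "ranked \<beta> k \<le> x" unfolding rk by (rule cInf_lower[OF _ bb])
      with \<open>x < ranked \<beta> k\<close> show False by simp
    qed
  next
    assume kN: "k < Ncnt \<beta> x"
    define T where "T = {U\<in>\<beta>. x < block_len U}"
    have finT: "finite T" unfolding T_def using finite_long[OF ip x] by simp
    have "T \<noteq> {}" using kN unfolding Ncnt_def T_def[symmetric] by auto
    define x' where "x' = Min (block_len ` T)"
    have "x' \<in> block_len ` T" unfolding x'_def using finT \<open>T \<noteq> {}\<close> by (intro Min_in) auto
    then have xx': "x < x'" unfolding T_def by auto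
    have Tge: "x' \<le> block_len U" if "U \<in> T" for U unfolding x'_def using finT that by auto
    have "x' \<le> Inf S"
    proof (rule cInf_greatest[OF ne])
      fix y assume y: "y \<in> S"
      show "x' \<le> y"
      proof (rule ccontr)
        assume "\<not> x' \<le> y"
        then have sub: "T \<subseteq> {U\<in>\<beta>. y < block_len U}" using Tge unfolding T_def by force
        have "y > 0" using y unfolding S_def by simp
        then have "card T \<le> card {U\<in>\<beta>. y < block_len U}"
          using card_mono[OF finite_long[OF ip] sub] by simp
        also have "\<dots> \<le> k" using y unfolding S_def by simp
        finally show False using kN unfolding Ncnt_def T_def by simp
      qed
    qed
    then show "x < ranked \<beta> k" using xx' rk by simp
  qed
qed

lemma Ncnt_integral:
  assumes ip: "interval_partition \<beta>" and S: "S \<subseteq> \<beta>"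
    and E: "\<And>F. finite F \<Longrightarrow> F \<subseteq> S \<Longrightarrow> (\<Sum>U\<in>F. block_len U) \<le> E"
  shows "(\<lambda>x. ennreal (indicator {0<..} x * real (Ncnt S x))) \<in> borel_measurable lborel"
    "(\<integral>\<^sup>+ x. ennreal (indicator {0<..} x * real (Ncnt S x)) \<partial>lborel) \<le> ennreal E"
proof -
  define Sm where "Sm = (\<lambda>m::nat. {U\<in>S. 1 / real (Suc m) < block_len U})"
  have finSm: "finite (Sm m)" for m
    unfolding Sm_def by (rule finite_subset[OF _ finite_long[OF ip, of "1 / real (Suc m)"]]) (use S in auto)
  have Smmono: "Sm m \<subseteq> Sm n" if "m \<le> n" for m n
  proof -
    have "1 / real (Suc n) \<le> 1 / real (Suc m)" using that by (simp add: frac_le)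
    then show ?thesis unfolding Sm_def by auto
  qed
  define f where "f = (\<lambda>m x. ennreal (\<Sum>U\<in>Sm m. indicator {0<..<block_len U} x))"
  have fmeas: "f m \<in> borel_measurable lborel" for m unfolding f_def by measurable
  have finc: "incseq f"
  proof (rule incseq_SucI, rule le_funI)
    fix m x
    show "f m x \<le> f (Suc m) x" unfolding f_def
      by (intro ennreal_leI sum_mono2 finSm Smmono) auto
  qed
  have fint: "(\<integral>\<^sup>+ x. f m x \<partial>lborel) \<le> ennreal E" for m
  proof -
    have pos: "U \<in> Sm m \<Longrightarrow> 0 < block_len U" for U using len_pos[OF ip, of U] S unfolding Sm_def by auto
    have "(\<integral>\<^sup>+ x. f m x \<partial>lborel) = (\<Sum>U\<in>Sm m. \<integral>\<^sup>+ x. ennreal (indicator {0<..<block_len U} x) \<partial>lborel)"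
    proof -
      have fe: "f m = (\<lambda>x. \<Sum>U\<in>Sm m. ennreal (indicator {0<..<block_len U} x))"
        unfolding f_def by (intro ext sum_ennreal[symmetric]) auto
      have "(\<integral>\<^sup>+ x. f m x \<partial>lborel) = (\<integral>\<^sup>+ x. (\<Sum>U\<in>Sm m. ennreal (indicator {0<..<block_len U} x)) \<partial>lborel)"
        by (simp only: fe)
      also have "\<dots> = (\<Sum>U\<in>Sm m. \<integral>\<^sup>+ x. ennreal (indicator {0<..<block_len U} x) \<partial>lborel)"
        by (rule nn_integral_sum) measurable
      finally show ?thesis .
    qed
    also have "\<dots> = (\<Sum>U\<in>Sm m. ennreal (block_len U))"
    proof (intro sum.cong refl)
      fix U assume "U \<in> Sm m"
      then have "0 \<le> block_len U" using pos less_imp_le by blast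
      then show "(\<integral>\<^sup>+ x. ennreal (indicator {0<..<block_len U} x) \<partial>lborel) = ennreal (block_len U)"
        by (simp add: ennreal_indicator)
    qed
    also have "\<dots> = ennreal (\<Sum>U\<in>Sm m. block_len U)" using pos by (intro sum_ennreal) (auto simp: less_imp_le)
    also have "\<dots> \<le> ennreal E" using E[OF finSm] S unfolding Sm_def by (intro ennreal_leI) auto
    finally show ?thesis .
  qed
  have fcard: "(\<Sum>U\<in>Sm m. indicator {0<..<block_len U} x) = real (card {U\<in>Sm m. x < block_len U})"
    if x: "0 < x" for x m
  proof -
    have "(\<Sum>U\<in>Sm m. indicator {0<..<block_len U} x) = (\<Sum>U\<in>Sm m. if x < block_len U then 1 else (0::real))"
      using x by (intro sum.cong) (auto simp: indicator_def)
    also have "\<dots> = real (card {U\<in>Sm m. x < block_len U})"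
      using finSm[of m] by (simp add: sum.If_cases Int_def conj_commute)
    finally show ?thesis .
  qed
  have eq: "ennreal (indicator {0<..} x * real (Ncnt S x)) = (SUP m. f m x)" for x
  proof (cases "0 < x")
    case False
    then show ?thesis unfolding f_def by (auto simp: indicator_def)
  next
    case True
    obtain m0 where m0: "1 / real (Suc m0) < x" using reals_Archimedean[OF True]
      by (metis of_nat_Suc inverse_eq_divide) 
    have le: "f m x \<le> ennreal (indicator {0<..} x * real (Ncnt S x))" for m
    proof -
      have "card {U\<in>Sm m. x < block_len U} \<le> Ncnt S x" unfolding Ncnt_def
        by (rule card_mono[OF finite_subset[OF _ finite_long[OF ip True]]]) (use S in \<open>auto simp: Sm_def\<close>)
      then show ?thesis unfolding f_def fcard[OF True] using True by (intro ennreal_leI) auto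
    qed
    have "{U\<in>Sm m0. x < block_len U} = {U\<in>S. x < block_len U}" unfolding Sm_def using m0 by auto
    then have "f m0 x = ennreal (indicator {0<..} x * real (Ncnt S x))"
      unfolding f_def fcard[OF True] Ncnt_def using True by simp
    then show ?thesis using le by (intro antisym SUP_upper2[of m0] SUP_least) auto
  qed
  have eqf: "(\<lambda>x. ennreal (indicator {0<..} x * real (Ncnt S x))) = (\<lambda>x. SUP m. f m x)"
    using eq by auto
  show "(\<lambda>x. ennreal (indicator {0<..} x * real (Ncnt S x))) \<in> borel_measurable lborel"
    unfolding eqf using fmeas by measurable
  have "(\<integral>\<^sup>+ x. ennreal (indicator {0<..} x * real (Ncnt S x)) \<partial>lborel) = (SUP m. \<integral>\<^sup>+ x. f m x \<partial>lborel)"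
    unfolding eqf by (rule nn_integral_monotone_convergence_SUP[OF finc fmeas])
  also have "\<dots> \<le> ennreal E" using fint by (rule SUP_least)
  finally show "(\<integral>\<^sup>+ x. ennreal (indicator {0<..} x * real (Ncnt S x)) \<partial>lborel) \<le> ennreal E" .
qed



lemma list_ind_int:
  fixes a b :: "'a \<Rightarrow> real"
  shows "(\<lambda>x. ennreal (\<Sum>p\<leftarrow>ps. indicator {min (a p) (b p)..<max (a p) (b p)} x)) \<in> borel_measurable lborel"
    "(\<integral>\<^sup>+ x. ennreal (\<Sum>p\<leftarrow>ps. indicator {min (a p) (b p)..<max (a p) (b p)} x) \<partial>lborel)
      = ennreal (\<Sum>p\<leftarrow>ps. \<bar>a p - b p\<bar>)"
proof -
  have m: "(\<lambda>x. (\<Sum>p\<leftarrow>ps. indicator {min (a p) (b p)..<max (a p) (b p)} x :: real)) \<in> borel_measurable lborel"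
    by (induction ps) auto
  then show "(\<lambda>x. ennreal (\<Sum>p\<leftarrow>ps. indicator {min (a p) (b p)..<max (a p) (b p)} x)) \<in> borel_measurable lborel"
    by (rule measurable_compose) simp
  show "(\<integral>\<^sup>+ x. ennreal (\<Sum>p\<leftarrow>ps. indicator {min (a p) (b p)..<max (a p) (b p)} x) \<partial>lborel)
      = ennreal (\<Sum>p\<leftarrow>ps. \<bar>a p - b p\<bar>)"
  proof (induction ps)
    case Nil then show ?case by simp
  next
    case (Cons q ps)
    have m': "(\<lambda>x. (\<Sum>p\<leftarrow>ps. indicator {min (a p) (b p)..<max (a p) (b p)} x :: real)) \<in> borel_measurable lborel"
      by (induction ps) auto
    have nn1: "0 \<le> (\<Sum>p\<leftarrow>ps. indicator {min (a p) (b p)..<max (a p) (b p)} x :: real)" for x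
      by (induction ps) auto
    have nn2: "0 \<le> (\<Sum>p\<leftarrow>ps. \<bar>a p - b p\<bar>)" by (induction ps) auto
    have "(\<integral>\<^sup>+ x. ennreal (\<Sum>p\<leftarrow>q # ps. indicator {min (a p) (b p)..<max (a p) (b p)} x) \<partial>lborel)
       = (\<integral>\<^sup>+ x. ennreal (indicator {min (a q) (b q)..<max (a q) (b q)} x)
            + ennreal (\<Sum>p\<leftarrow>ps. indicator {min (a p) (b p)..<max (a p) (b p)} x) \<partial>lborel)"
      by (intro nn_integral_cong) (simp only: list.map sum_list.Cons, rule ennreal_plus, simp, rule nn1)
    also have "\<dots> = (\<integral>\<^sup>+ x. ennreal (indicator {min (a q) (b q)..<max (a q) (b q)} x) \<partial>lborel)
          + (\<integral>\<^sup>+ x. ennreal (\<Sum>p\<leftarrow>ps. indicator {min (a p) (b p)..<max (a p) (b p)} x) \<partial>lborel)"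
    proof (rule nn_integral_add)
      have "(\<lambda>x. indicator {min (a q) (b q)..<max (a q) (b q)} x :: real) \<in> borel_measurable lborel"
        by simp
      then show "(\<lambda>x. ennreal (indicator {min (a q) (b q)..<max (a q) (b q)} x)) \<in> borel_measurable lborel"
        by (rule measurable_compose) simp
      show "(\<lambda>x. ennreal (\<Sum>p\<leftarrow>ps. indicator {min (a p) (b p)..<max (a p) (b p)} x)) \<in> borel_measurable lborel"
        using m' by (rule measurable_compose) simp
    qed
    also have "\<dots> = ennreal \<bar>a q - b q\<bar> + ennreal (\<Sum>p\<leftarrow>ps. \<bar>a p - b p\<bar>)"
      unfolding Cons.IH by (simp add: ennreal_indicator max_def min_def abs_if)
    also have "\<dots> = ennreal (\<Sum>p\<leftarrow>q # ps. \<bar>a p - b p\<bar>)" using nn2 by (simp add: ennreal_plus)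
    finally show ?case .
  qed
qed

lemma sum_xor_le:
  fixes n1 n2 :: nat
  shows "(\<Sum>k<K. (if (k < n1) \<noteq> (k < n2) then 1 else 0 :: real)) \<le> \<bar>real n1 - real n2\<bar>"
proof -
  have "(\<Sum>k<K. (if (k < n1) \<noteq> (k < n2) then 1 else 0 :: real))
      = (\<Sum>k\<in>{..<K} \<inter> {min n1 n2..<max n1 n2}. 1)"
    by (simp add: sum.If_cases Int_def) (intro arg_cong[where f=card] Collect_cong; auto)
  also have "\<dots> = real (card ({..<K} \<inter> {min n1 n2..<max n1 n2}))" by simp
  also have "\<dots> \<le> real (card {min n1 n2..<max n1 n2})"
    by (intro of_nat_mono card_mono) auto
  also have "\<dots> = \<bar>real n1 - real n2\<bar>" by (simp add: max_def min_def of_nat_diff)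
  finally show ?thesis .
qed

lemma ranked_bound:
  assumes ipb: "interval_partition \<beta>" and ipg: "interval_partition \<gamma>"
    and cs: "correspondence \<beta> \<gamma> cs"
    and E1: "\<And>F. finite F \<Longrightarrow> F \<subseteq> \<beta> - fst ` set cs \<Longrightarrow> (\<Sum>U\<in>F. block_len U) \<le> E1"
    and E2: "\<And>F. finite F \<Longrightarrow> F \<subseteq> \<gamma> - snd ` set cs \<Longrightarrow> (\<Sum>U\<in>F. block_len U) \<le> E2"
  shows "(\<Sum>k<K. \<bar>ranked \<beta> k - ranked \<gamma> k\<bar>) \<le> sdiff cs + E1 + E2"
proof -
  let ?A = "fst ` set cs" and ?B = "snd ` set cs"
  define r where "r = ranked \<beta>"
  define q where "q = ranked \<gamma>"
  have r0: "0 \<le> r k" "0 \<le> q k" for k unfolding r_def q_def using ranked_facts(1) ipb ipg by auto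
  define h where "h = (\<lambda>k x. indicator ({0<..<max (r k) (q k)} - {0<..<min (r k) (q k)}) x :: real)"
  define P where "P = (\<lambda>x. \<Sum>p\<leftarrow>cs. indicator {min (block_len (fst p)) (block_len (snd p))..<max (block_len (fst p)) (block_len (snd p))} x :: real)"
  define c1 where "c1 = (\<lambda>x. indicator {0<..} x * real (Ncnt (\<beta> - ?A) x) :: real)"
  define c2 where "c2 = (\<lambda>x. indicator {0<..} x * real (Ncnt (\<gamma> - ?B) x) :: real)"
  have E10: "0 \<le> E1" using E1[of "{}"] by simp
  have E20: "0 \<le> E2" using E2[of "{}"] by simp
  have hint: "(\<integral>\<^sup>+ x. ennreal (h k x) \<partial>lborel) = ennreal \<bar>r k - q k\<bar>" for k
  proof -
    have "(\<integral>\<^sup>+ x. ennreal (h k x) \<partial>lborel)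
        = emeasure lborel ({0<..<max (r k) (q k)} - {0<..<min (r k) (q k)})"
      unfolding h_def by (simp add: ennreal_indicator)
    also have "\<dots> = emeasure lborel {0<..<max (r k) (q k)} - emeasure lborel {0<..<min (r k) (q k)}"
      by (rule emeasure_Diff) (use r0[of k] in auto)
    also have "\<dots> = ennreal (max (r k) (q k)) - ennreal (min (r k) (q k))"
      using r0[of k] by simp
    also have "\<dots> = ennreal \<bar>r k - q k\<bar>"
      using r0[of k] by (subst ennreal_minus) (auto simp: max_def min_def)
    finally show ?thesis .
  qed
  have hmeas: "(\<lambda>x. ennreal (h k x)) \<in> borel_measurable lborel" for k
  proof -
    have "(\<lambda>x. h k x) \<in> borel_measurable lborel" unfolding h_def by simp
    then show ?thesis by (rule measurable_compose) simp
  qed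
  have pw: "(\<Sum>k<K. h k x) \<le> P x + c1 x + c2 x" for x
  proof (cases "0 < x")
    case False
    then have "h k x = 0" for k unfolding h_def by (simp add: indicator_def)
    moreover have "0 \<le> P x" unfolding P_def by (induction cs) auto
    ultimately show ?thesis using False unfolding c1_def c2_def by simp
  next
    case True
    define n1 where "n1 = Ncnt \<beta> x"
    define n2 where "n2 = Ncnt \<gamma> x"
    have hk: "h k x = (if (k < n1) \<noteq> (k < n2) then 1 else 0)" for k
    proof -
      have "x < r k \<longleftrightarrow> k < n1" unfolding r_def n1_def using ranked_facts(2)[OF ipb True] .
      moreover have "x < q k \<longleftrightarrow> k < n2" unfolding q_def n2_def using ranked_facts(2)[OF ipg True] .
      ultimately show ?thesis unfolding h_def using True by (auto simp: indicator_def max_def min_def)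
    qed
    have split1: "real n1 = (\<Sum>p\<leftarrow>cs. if x < block_len (fst p) then 1 else 0) + c1 x"
    proof -
      have fin: "finite {U\<in>\<beta>. x < block_len U}" using finite_long[OF ipb True] .
      have "{U\<in>\<beta>. x < block_len U} = {U\<in>?A. x < block_len U} \<union> {U\<in>\<beta> - ?A. x < block_len U}"
        using corr_props(3)[OF cs] by auto
      then have "n1 = card ({U\<in>?A. x < block_len U} \<union> {U\<in>\<beta> - ?A. x < block_len U})"
        unfolding n1_def Ncnt_def by simp
      also have "\<dots> = card {U\<in>?A. x < block_len U} + card {U\<in>\<beta> - ?A. x < block_len U}"
        by (rule card_Un_disjoint) (auto intro: finite_subset[OF _ fin])
      finally have "n1 = card {U\<in>?A. x < block_len U} + card {U\<in>\<beta> - ?A. x < block_len U}" .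
      moreover have "real (card {U\<in>?A. x < block_len U}) = (\<Sum>U\<in>?A. if x < block_len U then 1 else 0)"
        by (simp add: sum.If_cases Int_def conj_commute)
      ultimately show ?thesis unfolding c1_def Ncnt_def using True sum_fst_list(1)[OF cs, of "\<lambda>U. if x < block_len U then 1 else (0::real)"]
        by simp
    qed
    have split2: "real n2 = (\<Sum>p\<leftarrow>cs. if x < block_len (snd p) then 1 else 0) + c2 x"
    proof -
      have fin: "finite {U\<in>\<gamma>. x < block_len U}" using finite_long[OF ipg True] .
      have "{U\<in>\<gamma>. x < block_len U} = {U\<in>?B. x < block_len U} \<union> {U\<in>\<gamma> - ?B. x < block_len U}"
        using corr_props(4)[OF cs] by auto
      then have "n2 = card ({U\<in>?B. x < block_len U} \<union> {U\<in>\<gamma> - ?B. x < block_len U})"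
        unfolding n2_def Ncnt_def by simp
      also have "\<dots> = card {U\<in>?B. x < block_len U} + card {U\<in>\<gamma> - ?B. x < block_len U}"
        by (rule card_Un_disjoint) (auto intro: finite_subset[OF _ fin])
      finally have "n2 = card {U\<in>?B. x < block_len U} + card {U\<in>\<gamma> - ?B. x < block_len U}" .
      moreover have "real (card {U\<in>?B. x < block_len U}) = (\<Sum>U\<in>?B. if x < block_len U then 1 else 0)"
        by (simp add: sum.If_cases Int_def conj_commute)
      ultimately show ?thesis unfolding c2_def Ncnt_def using True sum_fst_list(2)[OF cs, of "\<lambda>U. if x < block_len U then 1 else (0::real)"]
        by simp
    qed
    have diffP: "\<bar>(\<Sum>p\<leftarrow>cs. (if x < block_len (fst p) then 1 else 0) - (if x < block_len (snd p) then 1 else (0::real)))\<bar> \<le> P x"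
      unfolding P_def
    proof (induction cs)
      case (Cons p ps)
      have "\<bar>(if x < block_len (fst p) then 1 else 0) - (if x < block_len (snd p) then 1 else (0::real))\<bar>
         = indicator {min (block_len (fst p)) (block_len (snd p))..<max (block_len (fst p)) (block_len (snd p))} x"
        by (auto simp: indicator_def min_def max_def)
      then show ?case using Cons.IH by (simp add: abs_triangle_ineq order_trans[OF abs_triangle_ineq])
    qed simp
    have c0: "0 \<le> c1 x" "0 \<le> c2 x" unfolding c1_def c2_def by auto
    have "(\<Sum>k<K. h k x) \<le> \<bar>real n1 - real n2\<bar>" unfolding hk by (rule sum_xor_le)
    also have "\<dots> \<le> P x + c1 x + c2 x"
      using diffP c0 unfolding split1 split2 by (simp add: sum_list_subtractf)
    finally show ?thesis .
  qed
  have nnh: "0 \<le> h k x" for k x unfolding h_def by simp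
  have Pm: "(\<lambda>x. ennreal (P x)) \<in> borel_measurable lborel" unfolding P_def by (rule list_ind_int(1))
  have Pi: "(\<integral>\<^sup>+ x. ennreal (P x) \<partial>lborel) = ennreal (sdiff cs)"
    unfolding P_def sdiff_def by (rule list_ind_int(2))
  have c1m: "(\<lambda>x. ennreal (c1 x)) \<in> borel_measurable lborel" and c1i: "(\<integral>\<^sup>+ x. ennreal (c1 x) \<partial>lborel) \<le> ennreal E1"
    unfolding c1_def using Ncnt_integral[OF ipb _ E1] by auto
  have c2m: "(\<lambda>x. ennreal (c2 x)) \<in> borel_measurable lborel" and c2i: "(\<integral>\<^sup>+ x. ennreal (c2 x) \<partial>lborel) \<le> ennreal E2"
    unfolding c2_def using Ncnt_integral[OF ipg _ E2] by auto
  have P0: "0 \<le> P x" for x unfolding P_def by (induction cs) auto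
  have c0: "0 \<le> c1 x" "0 \<le> c2 x" for x unfolding c1_def c2_def by auto
  have "ennreal (\<Sum>k<K. \<bar>r k - q k\<bar>) = (\<Sum>k<K. ennreal \<bar>r k - q k\<bar>)" by simp
  also have "\<dots> = (\<Sum>k<K. \<integral>\<^sup>+ x. ennreal (h k x) \<partial>lborel)" by (simp add: hint)
  also have "\<dots> = (\<integral>\<^sup>+ x. (\<Sum>k<K. ennreal (h k x)) \<partial>lborel)"
    by (rule nn_integral_sum[symmetric]) (rule hmeas)
  also have "\<dots> = (\<integral>\<^sup>+ x. ennreal (\<Sum>k<K. h k x) \<partial>lborel)"
    using nnh by (intro nn_integral_cong) simp
  also have "\<dots> \<le> (\<integral>\<^sup>+ x. ennreal (P x) + ennreal (c1 x) + ennreal (c2 x) \<partial>lborel)"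
  proof (rule nn_integral_mono)
    fix x
    have "ennreal (\<Sum>k<K. h k x) \<le> ennreal (P x + c1 x + c2 x)" using pw by (rule ennreal_leI)
    also have "\<dots> = ennreal (P x) + ennreal (c1 x) + ennreal (c2 x)"
      using P0[of x] c0[of x] by (simp add: ennreal_plus)
    finally show "ennreal (\<Sum>k<K. h k x) \<le> ennreal (P x) + ennreal (c1 x) + ennreal (c2 x)" .
  qed
  also have "\<dots> = (\<integral>\<^sup>+ x. ennreal (P x) + ennreal (c1 x) \<partial>lborel) + (\<integral>\<^sup>+ x. ennreal (c2 x) \<partial>lborel)"
    by (rule nn_integral_add) (use Pm c1m c2m in auto)
  also have "\<dots> = (\<integral>\<^sup>+ x. ennreal (P x) \<partial>lborel) + (\<integral>\<^sup>+ x. ennreal (c1 x) \<partial>lborel) + (\<integral>\<^sup>+ x. ennreal (c2 x) \<partial>lborel)"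
    by (subst nn_integral_add) (use Pm c1m in auto)
  also have "\<dots> \<le> ennreal (sdiff cs) + ennreal E1 + ennreal E2"
    unfolding Pi using c1i c2i by (intro add_mono) auto
  also have "\<dots> = ennreal (sdiff cs + E1 + E2)" using sdiff_nonneg[of cs] E10 E20 by (simp add: ennreal_plus)
  finally have "ennreal (\<Sum>k<K. \<bar>r k - q k\<bar>) \<le> ennreal (sdiff cs + E1 + E2)" .
  then show ?thesis unfolding r_def q_def using sdiff_nonneg[of cs] E10 E20
    by (subst (asm) ennreal_le_iff) auto
qed



lemma ip_empty: "interval_partition {}"
  unfolding interval_partition_def by (auto intro!: exI[of _ 0] countable_imp_null_set_lborel)

lemma ranked_empty: "ranked {} k = 0"
proof -
  have r0: "0 \<le> ranked {} k" using ranked_facts(1)[OF ip_empty] .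
  show ?thesis
  proof (rule ccontr)
    assume "ranked {} k \<noteq> 0"
    then have p: "0 < ranked {} k / 2" using r0 by simp
    have "ranked {} k / 2 < ranked {} k \<longleftrightarrow> k < Ncnt {} (ranked {} k / 2)"
      using ranked_facts(2)[OF ip_empty p] .
    then show False using p by (simp add: Ncnt_def)
  qed
qed

lemma ranked_summable:
  assumes ip: "interval_partition \<beta>"
  shows "summable (ranked \<beta>)"
proof -
  obtain L where L: "\<forall>U\<in>\<beta>. snd U \<le> L" "0 \<le> L" using ip_witness[OF ip] by blast
  have b: "(\<Sum>k<K. \<bar>ranked \<beta> k - ranked {} k\<bar>) \<le> sdiff [] + L + 0" for K
    by (rule ranked_bound[OF ip ip_empty corr_nil]) (use sum_len_le_L[OF ip _ _ L] in auto)
  show ?thesis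
  proof (rule summableI_nonneg_bounded)
    show "0 \<le> ranked \<beta> n" for n using ranked_facts(1)[OF ip] .
    show "(\<Sum>i<n. ranked \<beta> i) \<le> L" for n
      using b[of n] ranked_facts(1)[OF ip] by (simp add: ranked_empty sdiff_def)
  qed
qed

lemma ranked_cont:
  "cont_wrt (I_alpha \<alpha>) (d_alpha \<alpha>) (\<lambda>x y. \<Sum>k. \<bar>x k - y k\<bar>) ranked"
  unfolding cont_wrt_def
proof (intro ballI allI impI)
  fix \<beta> and \<epsilon> :: real assume bI: "\<beta> \<in> I_alpha \<alpha>" and e: "0 < \<epsilon>"
  show "\<exists>\<delta>>0. \<forall>\<gamma>\<in>I_alpha \<alpha>. d_alpha \<alpha> \<beta> \<gamma> < \<delta> \<longrightarrow> (\<Sum>k. \<bar>ranked \<beta> k - ranked \<gamma> k\<bar>) < \<epsilon>"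
  proof (intro exI[of _ "\<epsilon> / 2"] conjI ballI impI)
    fix \<gamma> assume gI: "\<gamma> \<in> I_alpha \<alpha>" and d: "d_alpha \<alpha> \<beta> \<gamma> < \<epsilon> / 2"
    have ipb: "interval_partition \<beta>" and ipg: "interval_partition \<gamma>"
      using bI gI unfolding I_alpha_def by auto
    obtain cs where cs: "correspondence \<beta> \<gamma> cs" and D: "distortion \<alpha> \<beta> \<gamma> cs < \<epsilon> / 2"
      using d_alpha_lessD[OF d] by blast
    define D where "D = distortion \<alpha> \<beta> \<gamma> cs"
    have b: "(\<Sum>k<K. \<bar>ranked \<beta> k - ranked \<gamma> k\<bar>) \<le> sdiff cs + (D - sdiff cs) + (D - sdiff cs)" for K
      by (rule ranked_bound[OF ipb ipg cs]) (use unmatched_fst[OF ipb cs] unmatched_snd[OF ipg cs] in \<open>auto simp: D_def\<close>)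
    have b2: "(\<Sum>k<K. \<bar>ranked \<beta> k - ranked \<gamma> k\<bar>) \<le> 2 * D" for K
      using b[of K] sdiff_nonneg[of cs] by simp
    have sm: "summable (\<lambda>k. \<bar>ranked \<beta> k - ranked \<gamma> k\<bar>)"
      by (rule summableI_nonneg_bounded[OF _ b2]) simp
    have "(\<Sum>k. \<bar>ranked \<beta> k - ranked \<gamma> k\<bar>) \<le> 2 * D" by (rule suminf_le_const[OF sm b2])
    also have "\<dots> < \<epsilon>" using D unfolding D_def by simp
    finally show "(\<Sum>k. \<bar>ranked \<beta> k - ranked \<gamma> k\<bar>) < \<epsilon>" .
  qed (use e in simp)
qed



definition ell :: "real \<Rightarrow> nat \<Rightarrow> real" where "ell a n = (real n + 1) powr (-1/a)"
definition ss :: "real \<Rightarrow> nat \<Rightarrow> real" where "ss a n = (\<Sum>k<n. ell a k)"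
definition LL :: "real \<Rightarrow> real" where "LL a = suminf (ell a)"
definition blk :: "real \<Rightarrow> nat \<Rightarrow> real \<times> real" where "blk a n = (ss a n, ss a (Suc n))"
definition bex :: "real \<Rightarrow> (real \<times> real) set" where "bex a = range (blk a)"
definition gN :: "real \<Rightarrow> nat \<Rightarrow> (real \<times> real) set" where
  "gN a N = blk a ` {..<N} \<union> {(ss a N, LL a)}"

context
  fixes \<alpha> :: real
  assumes a0: "0 < \<alpha>" and a1: "\<alpha> < 1"
begin

lemma ell_pos: "0 < ell \<alpha> n" unfolding ell_def by simp

lemma ell_summable: "summable (ell \<alpha>)"
proof -
  have "-1/\<alpha> < -1" using a0 a1 by (simp add: field_simps)
  then have "summable (\<lambda>n. real n powr (-1/\<alpha>))" by (simp add: summable_real_powr_iff)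
  then have "summable (\<lambda>n. real (Suc n) powr (-1/\<alpha>))" by (subst summable_Suc_iff)
  then show ?thesis unfolding ell_def by (simp add: add.commute)
qed

lemma ss_Suc: "ss \<alpha> (Suc n) = ss \<alpha> n + ell \<alpha> n" unfolding ss_def by simp

lemma ss_0: "ss \<alpha> 0 = 0" unfolding ss_def by simp

lemma ss_nonneg: "0 \<le> ss \<alpha> n" unfolding ss_def using ell_pos by (simp add: sum_nonneg less_imp_le)

lemma ss_less_Suc: "ss \<alpha> n < ss \<alpha> (Suc n)" using ss_Suc ell_pos by simp

lemma ss_mono: "m \<le> n \<Longrightarrow> ss \<alpha> m \<le> ss \<alpha> n"
  unfolding ss_def using ell_pos by (intro sum_mono2) (auto simp: less_imp_le)

lemma ss_strict: "m < n \<Longrightarrow> ss \<alpha> m < ss \<alpha> n"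
  using ss_less_Suc[of m] ss_mono[of "Suc m" n] by simp

lemma ss_less_LL: "ss \<alpha> n < LL \<alpha>"
  unfolding ss_def LL_def using sum_less_suminf[OF ell_summable] ell_pos by blast

lemma ss_lim: "ss \<alpha> \<longlonglongrightarrow> LL \<alpha>"
  unfolding ss_def LL_def using summable_LIMSEQ[OF ell_summable] by simp

lemma LL_pos: "0 < LL \<alpha>" using ss_less_LL[of 0] ss_0 by simp

lemma exists_above: "x < LL \<alpha> \<Longrightarrow> \<exists>M. x < ss \<alpha> M"
  using order_tendstoD(1)[OF ss_lim] eventually_sequentially by (metis order_refl)

lemma locate: "0 \<le> x \<Longrightarrow> x < ss \<alpha> M \<Longrightarrow> \<exists>n<M. ss \<alpha> n \<le> x \<and> x < ss \<alpha> (Suc n)"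
proof (induction M)
  case 0 then show ?case using ss_0 by simp
next
  case (Suc M)
  show ?case
  proof (cases "x < ss \<alpha> M")
    case True then show ?thesis using Suc by (meson less_SucI)
  next
    case False then show ?thesis using Suc.prems by (intro exI[of _ M]) auto
  qed
qed

lemma blk_disj:
  assumes "m \<noteq> n"
  shows "{fst (blk \<alpha> m)<..<snd (blk \<alpha> m)} \<inter> {fst (blk \<alpha> n)<..<snd (blk \<alpha> n)} = {}"
proof -
  have "ss \<alpha> (Suc m) \<le> ss \<alpha> n \<or> ss \<alpha> (Suc n) \<le> ss \<alpha> m"
    using assms ss_mono by (metis Suc_leI linorder_neqE_nat)
  then show ?thesis unfolding blk_def by auto
qed

lemma blk_inj: "inj (blk \<alpha>)"
proof (rule injI)
  fix m n assume "blk \<alpha> m = blk \<alpha> n"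
  then have e: "ss \<alpha> m = ss \<alpha> n" unfolding blk_def by simp
  show "m = n"
  proof (rule ccontr)
    assume "m \<noteq> n"
    then have "m < n \<or> n < m" by arith
    then show False using ss_strict[of m n] ss_strict[of n m] e by auto
  qed
qed

lemma bex_bound: "\<forall>U\<in>bex \<alpha>. snd U \<le> LL \<alpha>"
  unfolding bex_def blk_def using ss_less_LL less_imp_le by auto

lemma bex_null: "{0..LL \<alpha>} - (\<Union>(a,b)\<in>bex \<alpha>. {a<..<b}) \<in> null_sets lborel"
proof -
  have sub: "{0..LL \<alpha>} - (\<Union>(a,b)\<in>bex \<alpha>. {a<..<b}) \<subseteq> range (ss \<alpha>) \<union> {LL \<alpha>}"
  proof
    fix x assume x: "x \<in> {0..LL \<alpha>} - (\<Union>(a,b)\<in>bex \<alpha>. {a<..<b})"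
    show "x \<in> range (ss \<alpha>) \<union> {LL \<alpha>}"
    proof (cases "x = LL \<alpha>")
      case False
      then have "x < LL \<alpha>" using x by auto
      then obtain M where "x < ss \<alpha> M" using exists_above by blast
      then obtain n where n: "ss \<alpha> n \<le> x" "x < ss \<alpha> (Suc n)" using locate x by force
      have "x \<notin> {ss \<alpha> n<..<ss \<alpha> (Suc n)}" using x unfolding bex_def blk_def by auto
      then have "x = ss \<alpha> n" using n by auto
      then show ?thesis by auto
    qed simp
  qed
  show ?thesis
    by (rule countable_imp_null_set_lborel, rule countable_subset[OF sub]) simp
qed

lemma bex_ip: "interval_partition (bex \<alpha>)"
  unfolding interval_partition_def
proof (intro conjI)
  show "\<forall>(a,b)\<in>bex \<alpha>. 0 \<le> a \<and> a < b" unfolding bex_def blk_def using ss_nonneg ss_less_Suc by auto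
  show "\<forall>U\<in>bex \<alpha>. \<forall>V\<in>bex \<alpha>. U \<noteq> V \<longrightarrow> {fst U<..<snd U} \<inter> {fst V<..<snd V} = {}"
  proof (intro ballI impI)
    fix U V assume "U \<in> bex \<alpha>" "V \<in> bex \<alpha>" "U \<noteq> V"
    then obtain m n where mn: "U = blk \<alpha> m" "V = blk \<alpha> n" "m \<noteq> n" unfolding bex_def by auto
    show "{fst U<..<snd U} \<inter> {fst V<..<snd V} = {}" unfolding mn(1,2) by (rule blk_disj[OF mn(3)])
  qed
  show "\<exists>L. (\<forall>(a,b)\<in>bex \<alpha>. b \<le> L) \<and> {0..L} - (\<Union>(a,b)\<in>bex \<alpha>. {a<..<b}) \<in> null_sets lborel"
    using bex_bound bex_null by (intro exI[of _ "LL \<alpha>"]) auto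
qed

lemma bex_mass: "IP_mass (bex \<alpha>) = LL \<alpha>"
  by (rule ip_mass_eq[OF bex_ip _ bex_bound bex_null]) (simp add: bex_def)

end



lemma pow_lim: "0 < a \<Longrightarrow> ((\<lambda>h::real. h powr a) \<longlongrightarrow> 0) (at_right 0)"
  by (rule tendsto_zero_powrI[where b=a]) (auto simp: eventually_at_right_less tendsto_ident_at
      intro: eventually_mono[OF eventually_at_right_less[of "0::real"]])

lemma div_zero_gen:
  assumes "0 < \<alpha>" "finite F" "\<And>h. 0 < h \<Longrightarrow> {(a,b)\<in>\<beta>. b - a > h \<and> b \<le> t} \<subseteq> F"
  shows "(div_count \<alpha> \<beta> t \<longlongrightarrow> 0) (at_right 0)"
proof (rule tendsto_sandwich[where f="\<lambda>_. 0" and h="\<lambda>h. h powr \<alpha> * real (card F)"])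
  show "\<forall>\<^sub>F h in at_right 0. 0 \<le> div_count \<alpha> \<beta> t h"
    using eventually_at_right_less[of "0::real"] by eventually_elim (simp add: div_count_nonneg)
  show "\<forall>\<^sub>F h in at_right 0. div_count \<alpha> \<beta> t h \<le> h powr \<alpha> * real (card F)"
    using eventually_at_right_less[of "0::real"]
  proof eventually_elim
    case (elim h)
    have "card {(a,b)\<in>\<beta>. b - a > h \<and> b \<le> t} \<le> card F" by (rule card_mono[OF assms(2) assms(3)[OF elim]])
    then show ?case unfolding div_count_def by (intro mult_left_mono) auto
  qed
  have "((\<lambda>h. h powr \<alpha> * real (card F)) \<longlongrightarrow> 0 * real (card F)) (at_right 0)"
    by (intro tendsto_mult pow_lim[OF assms(1)] tendsto_const)
  then show "((\<lambda>h. h powr \<alpha> * real (card F)) \<longlongrightarrow> 0) (at_right 0)" by simp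
qed simp

context
  fixes \<alpha> :: real
  assumes a0: "0 < \<alpha>" and a1: "\<alpha> < 1"
begin

lemma ell_gt_iff:
  assumes h: "0 < h"
  shows "h < ell \<alpha> n \<longleftrightarrow> real n + 1 < h powr (-\<alpha>)"
proof -
  define z where "z = real n + 1"
  have z: "0 < z" unfolding z_def by simp
  have e: "ell \<alpha> n = z powr (-1/\<alpha>)" unfolding ell_def z_def ..
  show ?thesis unfolding e z_def[symmetric]
  proof
    assume hz: "h < z powr (-1/\<alpha>)"
    have "(z powr (-1/\<alpha>)) powr (-\<alpha>) < h powr (-\<alpha>)"
      by (rule powr_less_mono2_neg) (use a0 h hz in auto)
    also have "(z powr (-1/\<alpha>)) powr (-\<alpha>) = z" using a0 z by (simp add: powr_powr)
    finally show "z < h powr (-\<alpha>)" .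
  next
    assume zh: "z < h powr (-\<alpha>)"
    have "(h powr (-\<alpha>)) powr (-1/\<alpha>) < z powr (-1/\<alpha>)"
      by (rule powr_less_mono2_neg) (use a0 z zh in auto)
    also have "(h powr (-\<alpha>)) powr (-1/\<alpha>) = h" using a0 h by (simp add: powr_powr)
    finally show "h < z powr (-1/\<alpha>)" .
  qed
qed

lemma card_ell:
  assumes h: "0 < h"
  shows "h powr (-\<alpha>) - 1 \<le> real (card {n. h < ell \<alpha> n})" "real (card {n. h < ell \<alpha> n}) \<le> h powr (-\<alpha>)"
proof -
  define y where "y = h powr (-\<alpha>)"
  have "{n. h < ell \<alpha> n} = {..< nat \<lceil>y - 1\<rceil>}"
  proof (intro set_eqI iffI)
    fix n assume "n \<in> {n. h < ell \<alpha> n}"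
    then have "real n < y - 1" using ell_gt_iff[OF h] unfolding y_def by auto
    then have "int n < \<lceil>y - 1\<rceil>" unfolding less_ceiling_iff by simp
    then show "n \<in> {..< nat \<lceil>y - 1\<rceil>}" by auto
  next
    fix n assume "n \<in> {..< nat \<lceil>y - 1\<rceil>}"
    then have "int n < \<lceil>y - 1\<rceil>" by auto
    then have "real n < y - 1" unfolding less_ceiling_iff by simp
    then show "n \<in> {n. h < ell \<alpha> n}" using ell_gt_iff[OF h] unfolding y_def by auto
  qed
  then have c: "real (card {n. h < ell \<alpha> n}) = real (nat \<lceil>y - 1\<rceil>)" by simp
  have "y - 1 \<le> real (nat \<lceil>y - 1\<rceil>)" by linarith
  then show "h powr (-\<alpha>) - 1 \<le> real (card {n. h < ell \<alpha> n})" using c unfolding y_def by simp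
  have "0 < y" unfolding y_def using h by simp
  then have "real (nat \<lceil>y - 1\<rceil>) \<le> y" by linarith
  then show "real (card {n. h < ell \<alpha> n}) \<le> h powr (-\<alpha>)" using c unfolding y_def by simp
qed

lemma bex_count_L:
  assumes h: "0 < h"
  shows "card {(a,b)\<in>bex \<alpha>. b - a > h \<and> b \<le> LL \<alpha>} = card {n. h < ell \<alpha> n}"
proof -
  have d: "snd (blk \<alpha> n) - fst (blk \<alpha> n) = ell \<alpha> n" for n unfolding blk_def using ss_Suc[OF a0 a1] by simp
  have l: "snd (blk \<alpha> n) \<le> LL \<alpha>" for n unfolding blk_def using ss_less_LL[OF a0 a1, of "Suc n"] by simp
  have "{(a,b)\<in>bex \<alpha>. b - a > h \<and> b \<le> LL \<alpha>} = blk \<alpha> ` {n. h < ell \<alpha> n}"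
  proof (intro set_eqI iffI)
    fix U assume U: "U \<in> {(a,b)\<in>bex \<alpha>. b - a > h \<and> b \<le> LL \<alpha>}"
    then obtain n where n: "U = blk \<alpha> n" unfolding bex_def by auto
    have "snd U - fst U > h" using U by (cases U) auto
    then show "U \<in> blk \<alpha> ` {n. h < ell \<alpha> n}" using d[of n] n by auto
  next
    fix U assume "U \<in> blk \<alpha> ` {n. h < ell \<alpha> n}"
    then obtain n where n: "U = blk \<alpha> n" "h < ell \<alpha> n" by auto
    show "U \<in> {(a,b)\<in>bex \<alpha>. b - a > h \<and> b \<le> LL \<alpha>}" using d[of n] l[of n] n unfolding bex_def
      by (simp add: case_prod_beta)
  qed
  then show ?thesis using card_image[OF inj_on_subset[OF blk_inj[OF a0 a1]]] by simp
qed

lemma bex_lim_L: "(div_count \<alpha> (bex \<alpha>) (LL \<alpha>) \<longlongrightarrow> 1) (at_right 0)"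
proof (rule tendsto_sandwich[where f="\<lambda>h. 1 - h powr \<alpha>" and h="\<lambda>_. 1"])
  have eq: "h powr \<alpha> * h powr (-\<alpha>) = 1" if "0 < h" for h :: real
    using that by (simp add: powr_add[symmetric])
  show "\<forall>\<^sub>F h in at_right 0. 1 - h powr \<alpha> \<le> div_count \<alpha> (bex \<alpha>) (LL \<alpha>) h"
    using eventually_at_right_less[of "0::real"]
  proof eventually_elim
    case (elim h)
    have "h powr \<alpha> * (h powr (-\<alpha>) - 1) \<le> h powr \<alpha> * real (card {n. h < ell \<alpha> n})"
      by (intro mult_left_mono card_ell[OF elim]) auto
    then show ?case unfolding div_count_def bex_count_L[OF elim] using eq[OF elim]
      by (simp add: right_diff_distrib)
  qed
  show "\<forall>\<^sub>F h in at_right 0. div_count \<alpha> (bex \<alpha>) (LL \<alpha>) h \<le> 1"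
    using eventually_at_right_less[of "0::real"]
  proof eventually_elim
    case (elim h)
    have "h powr \<alpha> * real (card {n. h < ell \<alpha> n}) \<le> h powr \<alpha> * h powr (-\<alpha>)"
      by (intro mult_left_mono card_ell[OF elim]) auto
    then show ?case unfolding div_count_def bex_count_L[OF elim] using eq[OF elim] by simp
  qed
  have "((\<lambda>h. 1 - h powr \<alpha>) \<longlongrightarrow> 1 - 0) (at_right 0)"
    by (intro tendsto_diff tendsto_const pow_lim a0)
  then show "((\<lambda>h. 1 - h powr \<alpha>) \<longlongrightarrow> 1) (at_right 0)" by simp
qed simp

lemma bex_div: "diversity_property \<alpha> (bex \<alpha>)"
  unfolding diversity_property_def bex_mass[OF a0 a1]
proof
  fix t assume t: "t \<in> {0..LL \<alpha>}"
  show "\<exists>l. (div_count \<alpha> (bex \<alpha>) t \<longlongrightarrow> l) (at_right 0)"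
  proof (cases "t = LL \<alpha>")
    case True then show ?thesis using bex_lim_L by blast
  next
    case False
    then have "t < LL \<alpha>" using t by auto
    then obtain M where M: "t < ss \<alpha> M" using exists_above[OF a0 a1] by blast
    have "(div_count \<alpha> (bex \<alpha>) t \<longlongrightarrow> 0) (at_right 0)"
    proof (rule div_zero_gen[OF a0, of "blk \<alpha> ` {..<M}"])
      fix h :: real assume "0 < h"
      show "{(a,b)\<in>bex \<alpha>. b - a > h \<and> b \<le> t} \<subseteq> blk \<alpha> ` {..<M}"
      proof
        fix U assume U: "U \<in> {(a,b)\<in>bex \<alpha>. b - a > h \<and> b \<le> t}"
        then obtain n where n: "U = blk \<alpha> n" unfolding bex_def by auto
        then have "ss \<alpha> (Suc n) \<le> t" using U unfolding blk_def by auto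
        then have "ss \<alpha> (Suc n) < ss \<alpha> M" using M by simp
        then have "\<not> M \<le> Suc n" using ss_mono[OF a0 a1, of M "Suc n"] by linarith
        then have "n < M" by simp
        then show "U \<in> blk \<alpha> ` {..<M}" using n by auto
      qed
    qed simp
    then show ?thesis by blast
  qed
qed

lemma bex_I: "bex \<alpha> \<in> I_alpha \<alpha>"
  unfolding I_alpha_def using bex_ip[OF a0 a1] bex_div by simp

lemma bex_total: "total_div \<alpha> (bex \<alpha>) = Gamma (1 - \<alpha>)"
  unfolding total_div_def diversity_def bex_mass[OF a0 a1]
  using tendsto_Lim[OF _ bex_lim_L] by simp

end



context
  fixes \<alpha> :: real
  assumes a0: "0 < \<alpha>" and a1: "\<alpha> < 1"
begin

lemma gN_bound: "\<forall>U\<in>gN \<alpha> N. snd U \<le> LL \<alpha>"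
  unfolding gN_def blk_def using ss_less_LL[OF a0 a1] less_imp_le by auto

lemma gN_null: "{0..LL \<alpha>} - (\<Union>(a,b)\<in>gN \<alpha> N. {a<..<b}) \<in> null_sets lborel"
proof -
  have sub: "{0..LL \<alpha>} - (\<Union>(a,b)\<in>gN \<alpha> N. {a<..<b}) \<subseteq> ss \<alpha> ` {..N} \<union> {LL \<alpha>}"
  proof
    fix x assume x: "x \<in> {0..LL \<alpha>} - (\<Union>(a,b)\<in>gN \<alpha> N. {a<..<b})"
    have last: "x \<notin> {ss \<alpha> N<..<LL \<alpha>}" using x unfolding gN_def by auto
    show "x \<in> ss \<alpha> ` {..N} \<union> {LL \<alpha>}"
    proof (cases "x < ss \<alpha> N")
      case True
      then obtain n where n: "n < N" "ss \<alpha> n \<le> x" "x < ss \<alpha> (Suc n)" using locate[OF a0 a1] x by force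
      have "x \<notin> {ss \<alpha> n<..<ss \<alpha> (Suc n)}" using x n(1) unfolding gN_def blk_def by auto
      then have "x = ss \<alpha> n" using n by auto
      then show ?thesis using n(1) by auto
    next
      case False
      then show ?thesis using last x by auto
    qed
  qed
  show ?thesis
    by (rule countable_imp_null_set_lborel, rule countable_subset[OF sub]) simp
qed

lemma gN_ip: "interval_partition (gN \<alpha> N)"
  unfolding interval_partition_def
proof (intro conjI)
  show "\<forall>(a,b)\<in>gN \<alpha> N. 0 \<le> a \<and> a < b" unfolding gN_def blk_def
    using ss_nonneg[OF a0 a1] ss_less_Suc[OF a0 a1] ss_less_LL[OF a0 a1] by auto
  show "\<forall>U\<in>gN \<alpha> N. \<forall>V\<in>gN \<alpha> N. U \<noteq> V \<longrightarrow> {fst U<..<snd U} \<inter> {fst V<..<snd V} = {}"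
  proof (intro ballI impI)
    have lastd: "{fst (blk \<alpha> n)<..<snd (blk \<alpha> n)} \<inter> {ss \<alpha> N<..<LL \<alpha>} = {}" if "n < N" for n
    proof -
      have "ss \<alpha> (Suc n) \<le> ss \<alpha> N" using ss_mono[OF a0 a1] that by simp
      then show ?thesis unfolding blk_def by auto
    qed
    fix U V assume U: "U \<in> gN \<alpha> N" and V: "V \<in> gN \<alpha> N" and UV: "U \<noteq> V"
    show "{fst U<..<snd U} \<inter> {fst V<..<snd V} = {}"
    proof (cases "U = (ss \<alpha> N, LL \<alpha>)")
      case True
      then have "V \<noteq> (ss \<alpha> N, LL \<alpha>)" using UV by simp
      then obtain n where n: "V = blk \<alpha> n" "n < N" using V unfolding gN_def by auto
      have "{fst V<..<snd V} \<inter> {fst U<..<snd U} = {}" using lastd[OF n(2)] True n(1) by simp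
      then show ?thesis by (simp add: Int_commute)
    next
      case False
      then obtain m where m: "U = blk \<alpha> m" "m < N" using U unfolding gN_def by auto
      show ?thesis
      proof (cases "V = (ss \<alpha> N, LL \<alpha>)")
        case True
        then show ?thesis using lastd[OF m(2)] m by auto
      next
        case False
        then obtain n where "V = blk \<alpha> n" using V unfolding gN_def by auto
        then show ?thesis using m UV blk_disj[OF a0 a1, of m n] by auto
      qed
    qed
  qed
  show "\<exists>L. (\<forall>(a,b)\<in>gN \<alpha> N. b \<le> L) \<and> {0..L} - (\<Union>(a,b)\<in>gN \<alpha> N. {a<..<b}) \<in> null_sets lborel"
    using gN_bound[of N] gN_null[of N] by (intro exI[of _ "LL \<alpha>"]) (auto simp: case_prod_beta)
qed

lemma gN_mass: "IP_mass (gN \<alpha> N) = LL \<alpha>"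
  by (rule ip_mass_eq[OF gN_ip _ gN_bound gN_null]) (simp add: gN_def)

lemma gN_lim: "(div_count \<alpha> (gN \<alpha> N) t \<longlongrightarrow> 0) (at_right 0)"
  by (rule div_zero_gen[OF a0, of "gN \<alpha> N"]) (auto simp: gN_def)

lemma gN_I: "gN \<alpha> N \<in> I_alpha \<alpha>"
  unfolding I_alpha_def diversity_property_def using gN_ip gN_lim by blast

lemma gN_total: "total_div \<alpha> (gN \<alpha> N) = 0"
  unfolding total_div_def diversity_def using tendsto_Lim[OF _ gN_lim] by simp

lemma C_sub: "C_set (gN \<alpha> N) \<subseteq> C_set (bex \<alpha>)"
proof
  fix x assume x: "x \<in> C_set (gN \<alpha> N)"
  then have x0: "x \<in> {0..LL \<alpha>}" and xn: "x \<notin> (\<Union>(a,b)\<in>gN \<alpha> N. {a<..<b})"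
    unfolding C_set_def gN_mass by auto
  have "x \<notin> {ss \<alpha> n<..<ss \<alpha> (Suc n)}" for n
  proof
    assume xin: "x \<in> {ss \<alpha> n<..<ss \<alpha> (Suc n)}"
    show False
    proof (cases "n < N")
      case True
      then have "blk \<alpha> n \<in> gN \<alpha> N" unfolding gN_def by auto
      then show False using xn xin unfolding blk_def by auto
    next
      case False
      then have "ss \<alpha> N \<le> ss \<alpha> n" using ss_mono[OF a0 a1] by simp
      moreover have "ss \<alpha> (Suc n) < LL \<alpha>" by (rule ss_less_LL[OF a0 a1])
      ultimately have "x \<in> {ss \<alpha> N<..<LL \<alpha>}" using xin by auto
      then show False using xn unfolding gN_def by auto
    qed
  qed
  then show "x \<in> C_set (bex \<alpha>)" unfolding C_set_def bex_mass[OF a0 a1] unfolding bex_def blk_def using x0 by auto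
qed

lemma dH_bound: "d_H (bex \<alpha>) (gN \<alpha> N) \<le> LL \<alpha> - ss \<alpha> N"
proof -
  have L_in: "LL \<alpha> \<in> C_set (gN \<alpha> N)"
    unfolding C_set_def gN_mass using gN_bound LL_pos[OF a0 a1] by fastforce
  have z_in: "0 \<in> C_set (bex \<alpha>)"
    unfolding C_set_def bex_mass[OF a0 a1] unfolding bex_def blk_def using LL_pos[OF a0 a1] ss_nonneg[OF a0 a1]
    by (auto simp: less_imp_le) (meson leD)
  have pos: "0 \<le> LL \<alpha> - ss \<alpha> N" using ss_less_LL[OF a0 a1, of N] by simp
  have 1: "(SUP x\<in>C_set (bex \<alpha>). infdist x (C_set (gN \<alpha> N))) \<le> LL \<alpha> - ss \<alpha> N"
  proof (rule cSUP_least)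
    show "C_set (bex \<alpha>) \<noteq> {}" using z_in by blast
    fix x assume x: "x \<in> C_set (bex \<alpha>)"
    show "infdist x (C_set (gN \<alpha> N)) \<le> LL \<alpha> - ss \<alpha> N"
    proof (cases "x \<in> C_set (gN \<alpha> N)")
      case True then show ?thesis using pos by simp
    next
      case False
      have x0: "x \<in> {0..LL \<alpha>}" using x unfolding C_set_def bex_mass[OF a0 a1] by auto
      then obtain U where U: "U \<in> gN \<alpha> N" "x \<in> {fst U<..<snd U}"
        using False unfolding C_set_def gN_mass by auto
      have "U = (ss \<alpha> N, LL \<alpha>)"
      proof (rule ccontr)
        assume "U \<noteq> (ss \<alpha> N, LL \<alpha>)"
        then have "U \<in> bex \<alpha>" using U(1) unfolding gN_def bex_def by auto
        then show False using x U(2) unfolding C_set_def by auto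
      qed
      then have "ss \<alpha> N < x" "x < LL \<alpha>" using U(2) by auto
      have "infdist x (C_set (gN \<alpha> N)) \<le> dist x (LL \<alpha>)" by (rule infdist_le[OF L_in])
      also have "\<dots> \<le> LL \<alpha> - ss \<alpha> N" using \<open>ss \<alpha> N < x\<close> \<open>x < LL \<alpha>\<close> by (simp add: dist_real_def)
      finally show ?thesis .
    qed
  qed
  have 2: "(SUP y\<in>C_set (gN \<alpha> N). infdist y (C_set (bex \<alpha>))) \<le> LL \<alpha> - ss \<alpha> N"
  proof (rule cSUP_least)
    show "C_set (gN \<alpha> N) \<noteq> {}" using L_in by blast
    fix y assume "y \<in> C_set (gN \<alpha> N)"
    then have "y \<in> C_set (bex \<alpha>)" using C_sub by blast
    then show "infdist y (C_set (bex \<alpha>)) \<le> LL \<alpha> - ss \<alpha> N" using pos by simp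
  qed
  show ?thesis unfolding d_H_def hausdorff_dist_def using 1 2 by simp
qed

lemma not_dH_cont: "\<not> cont_wrt (I_alpha \<alpha>) d_H dist (total_div \<alpha>)"
proof
  assume c: "cont_wrt (I_alpha \<alpha>) d_H dist (total_div \<alpha>)"
  have G: "0 < Gamma (1 - \<alpha>)" using a1 by simp
  obtain \<delta> where \<delta>: "\<delta> > 0" "\<forall>y\<in>I_alpha \<alpha>. d_H (bex \<alpha>) y < \<delta> \<longrightarrow> dist (total_div \<alpha> (bex \<alpha>)) (total_div \<alpha> y) < Gamma (1 - \<alpha>)"
    using c bex_I[OF a0 a1] G unfolding cont_wrt_def by blast
  have "LL \<alpha> - \<delta> < LL \<alpha>" using \<delta>(1) by simp
  then obtain N where N: "LL \<alpha> - \<delta> < ss \<alpha> N" using exists_above[OF a0 a1] by blast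
  have "d_H (bex \<alpha>) (gN \<alpha> N) < \<delta>" using dH_bound[of N] N by simp
  then have "dist (total_div \<alpha> (bex \<alpha>)) (total_div \<alpha> (gN \<alpha> N)) < Gamma (1 - \<alpha>)"
    using \<delta>(2) gN_I by blast
  then show False using bex_total[OF a0 a1] gN_total G by (simp add: dist_real_def)
qed

end

theorem theorem2p4:
  fixes \<alpha> :: real
  assumes "0 < \<alpha>" and "\<alpha> < 1"
  shows
    "(\<forall>f::real \<Rightarrow> real. continuous_on {0..} f \<and> bounded (f ` {0..}) \<longrightarrow>
        cont_wrt (I_alpha \<alpha>) (d_alpha \<alpha>) dist (\<lambda>\<beta>. M_integral \<alpha> \<beta> f))
     \<and> cont_wrt (I_alpha \<alpha>) (d_alpha \<alpha>) dist (total_div \<alpha>)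
     \<and> \<not> cont_wrt (I_alpha \<alpha>) d_H dist (total_div \<alpha>)
     \<and> (\<forall>\<beta>\<in>I_alpha \<alpha>. summable (ranked \<beta>))
     \<and> cont_wrt (I_alpha \<alpha>) (d_alpha \<alpha>) (\<lambda>x y. \<Sum>k. \<bar>x k - y k\<bar>) ranked"
proof (intro conjI allI impI ballI)
  fix f :: "real \<Rightarrow> real"
  assume "continuous_on {0..} f \<and> bounded (f ` {0..})"
  then show "cont_wrt (I_alpha \<alpha>) (d_alpha \<alpha>) dist (\<lambda>\<beta>. M_integral \<alpha> \<beta> f)"
    using M_cont[OF assms] by blast
next
  show "cont_wrt (I_alpha \<alpha>) (d_alpha \<alpha>) dist (total_div \<alpha>)" by (rule total_div_cont)
next
  show "\<not> cont_wrt (I_alpha \<alpha>) d_H dist (total_div \<alpha>)" by (rule not_dH_cont[OF assms])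
next
  fix \<beta> assume "\<beta> \<in> I_alpha \<alpha>"
  then show "summable (ranked \<beta>)" unfolding I_alpha_def by (auto intro: ranked_summable)
next
  show "cont_wrt (I_alpha \<alpha>) (d_alpha \<alpha>) (\<lambda>x y. \<Sum>k. \<bar>x k - y k\<bar>) ranked" by (rule ranked_cont)
qed

end
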